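(* Let $T=(V,E)$ be a finite tree with positive vertex weights $(x_v)_{v\in V}$ and positive edge weights $(w_e)_{e\in E}$, and let $o,p\in V$ and $ou,pv\in E$. Then $$\frac{\partial}{\partial x_p}\mathcal R(T,o)\ \begin{cases}\geq0 & \text{if } o=p \text{ or } d_T(o,p)\text{ is odd},\\ \leq 0&\text{if } o\neq p\text{ and } d_T(o,p)\text{ is even};\end{cases}$$ $$\frac{\partial}{\partial w_{pv}}\mathcal E(T,ou)\ \begin{cases}\geq0 & \text{if } ou=pv \text{ or } d_T(ou,pv)\text{ is odd},\\ \leq 0&\text{if } ou\neq pv\text{ and } d_T(ou,pv)\text{ is even};\end{cases}$$ $$w_{pv}\frac{\partial}{\partial w_{pv}}\mathcal R(T,o)=x_o\frac{\partial}{\partial x_o}\mathcal E(T,pv)\ \begin{cases}\leq0 & \text{if } d_T(o,pv)\text{ is even},\\ \geq 0&\text{if } d_T(o,pv)\text{ is odd}.\end{cases}$$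
   Context: General monomer-dimer model on a finite graph $G=(V,E)$: the measure on matchings $D\subseteq E$ is $\mu(D)=Z_G^{-1}\prod_{e\in D}w_e\prod_{v\in\mathscr M_G(D)}x_v$, where $\mathscr M_G(D)$ is the set of vertices not covered by $D$ and $Z_G$ is the normalising sum. $\mathcal R(G,o)$ is the $\mu$-probability that $o\in\mathscr M_G(D)$, and $\mathcal E(G,ou)$ is the $\mu$-probability that $ou\in D$. $d_T(a,b)$ is the graph distance between vertices; $d_T(o,pv)=\min\{d_T(o,p),d_T(o,v)\}$ and $d_T(ou,pv)=\min\{d_T(o,pv),d_T(u,pv)\}$ (the minimum distance between an endpoint of $ou$ and an endpoint of $pv$). *)

theory Defs
  imports "HOL-Analysis.Analysis"
begin

definition simple_graph :: "'a set \<Rightarrow> 'a set set \<Rightarrow> bool" where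
  "simple_graph V E \<longleftrightarrow> finite V \<and> (\<forall>e\<in>E. \<exists>a b. a \<in> V \<and> b \<in> V \<and> a \<noteq> b \<and> e = {a, b})"

definition is_path :: "'a set \<Rightarrow> 'a set set \<Rightarrow> 'a list \<Rightarrow> bool" where
  "is_path V E xs \<longleftrightarrow> xs \<noteq> [] \<and> distinct xs \<and> set xs \<subseteq> V \<and>
     (\<forall>i. Suc i < length xs \<longrightarrow> {xs ! i, xs ! Suc i} \<in> E)"

definition is_cycle :: "'a set \<Rightarrow> 'a set set \<Rightarrow> 'a list \<Rightarrow> bool" where
  "is_cycle V E xs \<longleftrightarrow> is_path V E xs \<and> length xs \<ge> 3 \<and> {last xs, hd xs} \<in> E"

definition connected_graph :: "'a set \<Rightarrow> 'a set set \<Rightarrow> bool" where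
  "connected_graph V E \<longleftrightarrow>
     (\<forall>a\<in>V. \<forall>b\<in>V. \<exists>xs. is_path V E xs \<and> hd xs = a \<and> last xs = b)"

definition is_tree :: "'a set \<Rightarrow> 'a set set \<Rightarrow> bool" where
  "is_tree V E \<longleftrightarrow> simple_graph V E \<and> V \<noteq> {} \<and> connected_graph V E \<and>
     (\<nexists>xs. is_cycle V E xs)"

definition gdist :: "'a set \<Rightarrow> 'a set set \<Rightarrow> 'a \<Rightarrow> 'a \<Rightarrow> nat" where
  "gdist V E a b = (LEAST n. \<exists>xs. is_path V E xs \<and> hd xs = a \<and> last xs = b \<and> length xs = Suc n)"

text \<open>d(o, pv) = min (d(o,p), d(o,v)).\<close>
definition vedist :: "'a set \<Rightarrow> 'a set set \<Rightarrow> 'a \<Rightarrow> 'a \<Rightarrow> 'a \<Rightarrow> nat" where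
  "vedist V E a p v = min (gdist V E a p) (gdist V E a v)"

text \<open>d(ou, pv) = min (d(o,pv), d(u,pv)).\<close>
definition eedist :: "'a set \<Rightarrow> 'a set set \<Rightarrow> 'a \<Rightarrow> 'a \<Rightarrow> 'a \<Rightarrow> 'a \<Rightarrow> nat" where
  "eedist V E a u p v = min (vedist V E a p v) (vedist V E u p v)"

definition is_matching :: "'a set set \<Rightarrow> 'a set set \<Rightarrow> bool" where
  "is_matching E D \<longleftrightarrow> D \<subseteq> E \<and> (\<forall>e\<in>D. \<forall>f\<in>D. e \<noteq> f \<longrightarrow> e \<inter> f = {})"

definition monomers :: "'a set \<Rightarrow> 'a set set \<Rightarrow> 'a set" where
  "monomers V D = V - \<Union>D"

definition md_weight :: "'a set \<Rightarrow> ('a \<Rightarrow> real) \<Rightarrow> ('a set \<Rightarrow> real) \<Rightarrow> 'a set set \<Rightarrow> real" where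
  "md_weight V x w D = (\<Prod>e\<in>D. w e) * (\<Prod>v\<in>monomers V D. x v)"

definition md_Z :: "'a set \<Rightarrow> 'a set set \<Rightarrow> ('a \<Rightarrow> real) \<Rightarrow> ('a set \<Rightarrow> real) \<Rightarrow> real" where
  "md_Z V E x w = (\<Sum>D\<in>{D. is_matching E D}. md_weight V x w D)"

text \<open>R(G,o): probability that o is a monomer.\<close>
definition md_R :: "'a set \<Rightarrow> 'a set set \<Rightarrow> ('a \<Rightarrow> real) \<Rightarrow> ('a set \<Rightarrow> real) \<Rightarrow> 'a \<Rightarrow> real" where
  "md_R V E x w a = (\<Sum>D\<in>{D. is_matching E D \<and> a \<in> monomers V D}. md_weight V x w D) / md_Z V E x w"

text \<open>E(G,e): probability that the edge e belongs to the dimer configuration.\<close>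
definition md_E :: "'a set \<Rightarrow> 'a set set \<Rightarrow> ('a \<Rightarrow> real) \<Rightarrow> ('a set \<Rightarrow> real) \<Rightarrow> 'a set \<Rightarrow> real" where
  "md_E V E x w e = (\<Sum>D\<in>{D. is_matching E D \<and> e \<in> D}. md_weight V x w D) / md_Z V E x w"

end

theory Submission
  imports Defs
begin


definition Zs :: "'a set set \<Rightarrow> ('a\<Rightarrow>real) \<Rightarrow> ('a set\<Rightarrow>real) \<Rightarrow> 'a set \<Rightarrow> ('a set set \<Rightarrow> bool) \<Rightarrow> real" where
 "Zs E x w U P = (\<Sum>D\<in>{D. is_matching E D \<and> \<Union>D \<subseteq> U \<and> P D}. md_weight U x w D)"

locale sgraph =
  fixes V :: "'a set" and E :: "'a set set"
  assumes sg: "simple_graph V E"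
begin

lemma finV: "finite V" using sg by (simp add: simple_graph_def)

lemma edge2: "e \<in> E \<Longrightarrow> \<exists>a b. a \<in> V \<and> b \<in> V \<and> a \<noteq> b \<and> e = {a,b}"
  using sg by (simp add: simple_graph_def)

lemma EPow: "E \<subseteq> Pow V" using edge2 by blast

lemma finE: "finite E" using EPow finV by (meson finite_Pow_iff finite_subset)

lemma edge_ne: "e \<in> E \<Longrightarrow> e \<noteq> {}" using edge2 by blast

lemma edge_fin: "e \<in> E \<Longrightarrow> finite e" using edge2 by blast

lemma fin_match: "finite {D. is_matching E D \<and> Q D}"
  by (rule finite_subset[of _ "Pow E"]) (auto simp: is_matching_def finE)

lemma match_fin: "is_matching E D \<Longrightarrow> finite D"
  using finE by (auto simp: is_matching_def intro: finite_subset)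

lemma Zs_split: "Zs E x w U P = Zs E x w U (\<lambda>D. P D \<and> Q D) + Zs E x w U (\<lambda>D. P D \<and> \<not> Q D)"
proof -
  have "{D. is_matching E D \<and> \<Union>D \<subseteq> U \<and> P D} = {D. is_matching E D \<and> \<Union>D \<subseteq> U \<and> P D \<and> Q D} \<union> {D. is_matching E D \<and> \<Union>D \<subseteq> U \<and> P D \<and> \<not> Q D}" by blast
  then show ?thesis unfolding Zs_def
    by (subst sum.union_disjoint[symmetric]) (auto intro: fin_match)
qed

lemma Zs_cong: "(\<And>D. is_matching E D \<Longrightarrow> \<Union>D \<subseteq> U \<Longrightarrow> P D = Q D) \<Longrightarrow> Zs E x w U P = Zs E x w U Q"
  unfolding Zs_def by (rule sum.cong) auto

lemma weight_nonneg: "U \<subseteq> V \<Longrightarrow> \<forall>a\<in>V. x a > 0 \<Longrightarrow> \<forall>e\<in>E. w e > 0 \<Longrightarrow> is_matching E D \<Longrightarrow> md_weight U x w D \<ge> 0"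
  unfolding md_weight_def monomers_def is_matching_def
  by (intro mult_nonneg_nonneg prod_nonneg) (auto intro: less_imp_le)

lemma weight_pos: "U \<subseteq> V \<Longrightarrow> \<forall>a\<in>V. x a > 0 \<Longrightarrow> \<forall>e\<in>E. w e > 0 \<Longrightarrow> is_matching E D \<Longrightarrow> md_weight U x w D > 0"
  unfolding md_weight_def monomers_def is_matching_def
  by (intro mult_pos_pos prod_pos) auto

lemma Zs_nonneg: "U \<subseteq> V \<Longrightarrow> \<forall>a\<in>V. x a > 0 \<Longrightarrow> \<forall>e\<in>E. w e > 0 \<Longrightarrow> Zs E x w U P \<ge> 0"
  unfolding Zs_def by (rule sum_nonneg) (auto intro: weight_nonneg)

lemma Z_pos: "U \<subseteq> V \<Longrightarrow> \<forall>a\<in>V. x a > 0 \<Longrightarrow> \<forall>e\<in>E. w e > 0 \<Longrightarrow> Zs E x w U (\<lambda>_. True) > 0"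
proof -
  assume a: "U \<subseteq> V" "\<forall>a\<in>V. x a > 0" "\<forall>e\<in>E. w e > 0"
  have m: "is_matching E {}" by (simp add: is_matching_def)
  have "0 < md_weight U x w {}" using weight_pos[OF a m] .
  also have "\<dots> \<le> Zs E x w U (\<lambda>_. True)" unfolding Zs_def
    by (rule member_le_sum) (auto intro: fin_match weight_nonneg[OF a] m)
  finally show ?thesis .
qed

lemma Zs_le: "U \<subseteq> V \<Longrightarrow> \<forall>a\<in>V. x a > 0 \<Longrightarrow> \<forall>e\<in>E. w e > 0 \<Longrightarrow> Zs E x w U P \<le> Zs E x w U (\<lambda>_. True)"
  using Zs_split[of x w U "\<lambda>_. True" P] Zs_nonneg[of U x w "\<lambda>D. \<not> P D"] by simp

end

context sgraph begin

lemma remove: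
  assumes U: "U \<subseteq> V" and M: "M \<subseteq> U" and F: "is_matching E F" and FU: "\<Union>F \<subseteq> U"
    and MF: "M \<inter> \<Union>F = {}"
  shows "Zs E x w U (\<lambda>D. M \<inter> \<Union>D = {} \<and> F \<subseteq> D) = prod x M * prod w F * Zs E x w (U - M - \<Union>F) (\<lambda>_. True)"
proof -
  let ?U' = "U - M - \<Union>F"
  let ?S' = "{D. is_matching E D \<and> \<Union>D \<subseteq> ?U' \<and> True}"
  let ?S = "{D. is_matching E D \<and> \<Union>D \<subseteq> U \<and> (M \<inter> \<Union>D = {} \<and> F \<subseteq> D)}"
  have finM: "finite M" using M U finV by (meson finite_subset)
  have finF: "finite F" using F by (rule match_fin)
  have FE: "F \<subseteq> E" using F by (simp add: is_matching_def)
  have disj: "D \<inter> F = {}" if "D \<in> ?S'" for D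
  proof -
    { fix e assume "e \<in> D" "e \<in> F"
      then have "e \<subseteq> \<Union>F" "e \<subseteq> ?U'" using that by auto
      then have "e = {}" by blast
      with \<open>e \<in> F\<close> FE edge_ne have False by blast }
    then show ?thesis by blast
  qed
  have bij: "bij_betw (\<lambda>D. D \<union> F) ?S' ?S"
  proof (rule bij_betw_byWitness[where f'="\<lambda>D. D - F"])
    show "\<forall>D\<in>?S'. D \<union> F - F = D"
    proof
      fix D assume "D \<in> ?S'"
      then have "D \<inter> F = {}" by (rule disj)
      then show "D \<union> F - F = D" by (simp add: Un_Diff Diff_triv)
    qed
    show "\<forall>D\<in>?S. D - F \<union> F = D"
    proof
      fix D assume "D \<in> ?S"
      then have "F \<subseteq> D" by simp
      then show "D - F \<union> F = D" by (simp add: Un_absorb2)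
    qed
    show "(\<lambda>D. D \<union> F) ` ?S' \<subseteq> ?S"
    proof
      fix D' assume "D' \<in> (\<lambda>D. D \<union> F) ` ?S'"
      then obtain D where D': "D' = D \<union> F" and D: "D \<in> ?S'" by (rule imageE)
      have DE: "D \<subseteq> E" and Dm: "\<forall>e\<in>D. \<forall>f\<in>D. e \<noteq> f \<longrightarrow> e \<inter> f = {}"
        and DU: "\<Union>D \<subseteq> ?U'" using D by (auto simp: is_matching_def)
      have Fm: "\<forall>e\<in>F. \<forall>f\<in>F. e \<noteq> f \<longrightarrow> e \<inter> f = {}" using F by (simp add: is_matching_def)
      have cross: "e \<inter> f = {}" if "e \<in> D" "f \<in> F" for e f
        using DU that by blast
      have "is_matching E D'" unfolding D' is_matching_def
      proof (intro conjI ballI impI)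
        show "D \<union> F \<subseteq> E" using DE FE by blast
        fix e f assume "e \<in> D \<union> F" "f \<in> D \<union> F" "e \<noteq> f"
        then show "e \<inter> f = {}" using Dm Fm cross by blast
      qed
      moreover have "\<Union>D' \<subseteq> U" using DU FU unfolding D' by blast
      moreover have "M \<inter> \<Union>D' = {}" using DU MF unfolding D' by blast
      moreover have "F \<subseteq> D'" unfolding D' by blast
      ultimately show "D' \<in> ?S" by blast
    qed
    show "(\<lambda>D. D - F) ` ?S \<subseteq> ?S'"
    proof
      fix D' assume "D' \<in> (\<lambda>D. D - F) ` ?S"
      then obtain D where D': "D' = D - F" and D: "D \<in> ?S" by (rule imageE)
      have m: "is_matching E D'" using D unfolding D' is_matching_def by auto
      have "\<Union>D' \<subseteq> ?U'"
      proof
        fix a assume "a \<in> \<Union>D'"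
        then obtain e where e: "e \<in> D" "e \<notin> F" "a \<in> e" unfolding D' by auto
        have "a \<in> U" "a \<notin> M" using D e by auto
        moreover have "a \<notin> \<Union>F"
        proof
          assume "a \<in> \<Union>F"
          then obtain f where "f \<in> F" "a \<in> f" by auto
          then have "f \<in> D" "f \<noteq> e" using D e by auto
          then have "e \<inter> f = {}" using D e unfolding is_matching_def by auto
          with \<open>a \<in> f\<close> e show False by auto
        qed
        ultimately show "a \<in> ?U'" by blast
      qed
      then show "D' \<in> ?S'" using m by auto
    qed
  qed
  have wt: "md_weight U x w (D \<union> F) = prod x M * prod w F * md_weight ?U' x w D" if "D \<in> ?S'" for D
  proof -
    have fD: "finite D" using that match_fin by auto
    have "prod w (D \<union> F) = prod w D * prod w F"
      using disj[OF that] fD finF by (simp add: prod.union_disjoint)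
    moreover have "monomers U (D \<union> F) = monomers ?U' D \<union> M"
      using that M MF unfolding monomers_def by auto
    moreover have "monomers ?U' D \<inter> M = {}" unfolding monomers_def by auto
    moreover have "finite (monomers ?U' D)" unfolding monomers_def using U finV
      by (meson Diff_subset finite_subset)
    ultimately show ?thesis unfolding md_weight_def
      by (simp add: prod.union_disjoint finM)
  qed
  have "Zs E x w U (\<lambda>D. M \<inter> \<Union>D = {} \<and> F \<subseteq> D) = (\<Sum>D\<in>?S. md_weight U x w D)"
    unfolding Zs_def by simp
  also have "\<dots> = (\<Sum>D\<in>?S'. md_weight U x w (D \<union> F))"
    by (rule sum.reindex_bij_betw[symmetric, OF bij])
  also have "\<dots> = (\<Sum>D\<in>?S'. prod x M * prod w F * md_weight ?U' x w D)"
    by (rule sum.cong) (auto simp: wt)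
  also have "\<dots> = prod x M * prod w F * Zs E x w ?U' (\<lambda>_. True)"
    unfolding Zs_def by (simp add: sum_distrib_left)
  finally show ?thesis .
qed

lemma remove_v:
  assumes "U \<subseteq> V" "a \<in> U"
  shows "Zs E x w U (\<lambda>D. a \<notin> \<Union>D) = x a * Zs E x w (U - {a}) (\<lambda>_. True)"
proof -
  have "Zs E x w U (\<lambda>D. a \<notin> \<Union>D) = Zs E x w U (\<lambda>D. {a} \<inter> \<Union>D = {} \<and> {} \<subseteq> D)"
    by (rule Zs_cong) auto
  also have "\<dots> = x a * Zs E x w (U - {a}) (\<lambda>_. True)"
    using remove[of U "{a}" "{}"] assms by (simp add: is_matching_def)
  finally show ?thesis .
qed

lemma remove_e:
  assumes "U \<subseteq> V" "e \<in> E" "e \<subseteq> U"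
  shows "Zs E x w U (\<lambda>D. e \<in> D) = w e * Zs E x w (U - e) (\<lambda>_. True)"
proof -
  have "Zs E x w U (\<lambda>D. e \<in> D) = Zs E x w U (\<lambda>D. {} \<inter> \<Union>D = {} \<and> {e} \<subseteq> D)"
    by (rule Zs_cong) auto
  also have "\<dots> = w e * Zs E x w (U - e) (\<lambda>_. True)"
    using remove[of U "{}" "{e}"] assms by (simp add: is_matching_def)
  finally show ?thesis .
qed

end

context sgraph begin

abbreviation "Z x w U \<equiv> Zs E x w U (\<lambda>_. True)"

lemma covered_split:
  assumes U: "U \<subseteq> V" and a: "a \<in> U"
  shows "Zs E x w U (\<lambda>D. a \<in> \<Union>D) = (\<Sum>b\<in>{b\<in>U. b \<noteq> a \<and> {a,b} \<in> E}. Zs E x w U (\<lambda>D. {a,b} \<in> D))"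
proof -
  define N where "N = {b\<in>U. b \<noteq> a \<and> {a,b} \<in> E}"
  define A where "A = (\<lambda>b. {D. is_matching E D \<and> \<Union>D \<subseteq> U \<and> {a,b} \<in> D})"
  define S where "S = {D. is_matching E D \<and> \<Union>D \<subseteq> U \<and> a \<in> \<Union>D}"
  have eq: "S = \<Union> (A ` N)"
  proof (rule set_eqI, rule iffI)
    fix D assume "D \<in> S"
    then have m: "is_matching E D" and DU: "\<Union>D \<subseteq> U" and aD: "a \<in> \<Union>D" unfolding S_def by simp_all
    from aD obtain e where e: "e \<in> D" "a \<in> e" by (rule UnionE)
    have eE: "e \<in> E" using m e(1) unfolding is_matching_def by blast
    then obtain c d where cd: "c \<noteq> d" "e = {c,d}" using edge2[OF eE] by blast
    have "\<exists>b. b \<noteq> a \<and> e = {a,b}"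
    proof (cases "a = c")
      case True then show ?thesis using cd True by (intro exI[of _ d]) simp
    next
      case False then have "a = d" using e(2) cd(2) by simp
      then show ?thesis using cd by (metis insert_commute)
    qed
    then obtain b where b: "b \<noteq> a" "e = {a,b}" by blast
    have "b \<in> e" using b(2) by simp
    then have "b \<in> U" using DU e(1) by blast
    then have "b \<in> N" unfolding N_def using b eE by simp
    moreover have "D \<in> A b" unfolding A_def using m DU e(1) b(2) by simp
    ultimately show "D \<in> \<Union> (A ` N)" by (rule UN_I)
  next
    fix D assume "D \<in> \<Union> (A ` N)"
    then obtain b where "b \<in> N" "D \<in> A b" by (rule UN_E)
    then have "is_matching E D" "\<Union>D \<subseteq> U" "{a,b} \<in> D" unfolding A_def by simp_all
    then have "a \<in> \<Union>D" by (meson UnionI insertI1)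
    then show "D \<in> S" unfolding S_def using \<open>is_matching E D\<close> \<open>\<Union>D \<subseteq> U\<close> by simp
  qed
  have disj: "A b \<inter> A c = {}" if "b \<in> N" "c \<in> N" "b \<noteq> c" for b c
  proof -
    { fix D assume D: "D \<in> A b" "D \<in> A c"
      then have m: "is_matching E D" and "{a,b} \<in> D" "{a,c} \<in> D" unfolding A_def by simp_all
      moreover have "{a,b} \<noteq> {a,c}" using that by (auto simp: doubleton_eq_iff)
      moreover have H: "\<forall>e\<in>D. \<forall>f\<in>D. e \<noteq> f \<longrightarrow> e \<inter> f = {}" using m by (simp add: is_matching_def)
      ultimately have "{a,b} \<inter> {a,c} = {}" by (meson bspec)
      then have False by (simp only: insert_inter_insert) simp }
    then show ?thesis by blast
  qed
  have finN: "finite N" unfolding N_def using U finV by (simp add: finite_subset)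
  have "Zs E x w U (\<lambda>D. a \<in> \<Union>D) = sum (md_weight U x w) S" unfolding Zs_def S_def by simp
  also have "\<dots> = sum (md_weight U x w) (\<Union> (A ` N))" by (simp only: eq)
  also have "\<dots> = (\<Sum>b\<in>N. sum (md_weight U x w) (A b))"
  proof (rule sum.UNION_disjoint)
    show "finite N" by (rule finN)
    show "\<forall>b\<in>N. finite (A b)" unfolding A_def by (intro ballI fin_match)
    show "\<forall>b\<in>N. \<forall>c\<in>N. b \<noteq> c \<longrightarrow> A b \<inter> A c = {}" using disj by blast
  qed
  also have "\<dots> = (\<Sum>b\<in>N. Zs E x w U (\<lambda>D. {a,b} \<in> D))" unfolding Zs_def A_def by simp
  finally show ?thesis unfolding N_def .
qed

lemma recursion:
  assumes U: "U \<subseteq> V" and a: "a \<in> U"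
  shows "Z x w U = x a * Z x w (U - {a}) + (\<Sum>b\<in>{b\<in>U. b \<noteq> a \<and> {a,b} \<in> E}. w {a,b} * Z x w (U - {a,b}))"
proof -
  have "Z x w U = Zs E x w U (\<lambda>D. a \<notin> \<Union>D) + Zs E x w U (\<lambda>D. a \<in> \<Union>D)"
    using Zs_split[of x w U "\<lambda>_. True" "\<lambda>D. a \<notin> \<Union>D"] by simp
  also have "Zs E x w U (\<lambda>D. a \<notin> \<Union>D) = x a * Z x w (U - {a})" by (rule remove_v[OF U a])
  also have "Zs E x w U (\<lambda>D. a \<in> \<Union>D) = (\<Sum>b\<in>{b\<in>U. b \<noteq> a \<and> {a,b} \<in> E}. w {a,b} * Z x w (U - {a,b}))"
    unfolding covered_split[OF U a]
    by (rule sum.cong) (use U a in \<open>auto intro!: remove_e\<close>)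
  finally show ?thesis .
qed

lemma Z_empty: "Z x w {} = 1"
proof -
  have eq: "{D. is_matching E D \<and> \<Union>D \<subseteq> {} \<and> True} = {{}}"
  proof (rule set_eqI, rule iffI)
    fix D assume "D \<in> {D. is_matching E D \<and> \<Union>D \<subseteq> {} \<and> True}"
    then have DE: "D \<subseteq> E" and DU: "\<Union>D \<subseteq> {}" by (simp_all add: is_matching_def)
    have "D = {}"
    proof (rule ccontr)
      assume "D \<noteq> {}"
      then obtain e where e: "e \<in> D" by blast
      then have "e \<subseteq> {}" using DU by blast
      moreover have "e \<noteq> {}" using e DE edge_ne by blast
      ultimately show False by blast
    qed
    then show "D \<in> {{}}" by simp
  next
    fix D :: "'a set set" assume "D \<in> {{}}"
    then have "D = {}" by simp
    then show "D \<in> {D. is_matching E D \<and> \<Union>D \<subseteq> {} \<and> True}" by (simp add: is_matching_def)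
  qed
  have "Z x w {} = md_weight {} x w {}" unfolding Zs_def eq by simp
  also have "\<dots> = 1" by (simp add: md_weight_def monomers_def)
  finally show ?thesis .
qed

lemma weight_cong:
  assumes "\<And>v. v \<in> monomers U D \<Longrightarrow> x v = x' v" "\<And>e. e \<in> D \<Longrightarrow> w e = w' e"
  shows "md_weight U x w D = md_weight U x' w' D"
proof -
  have "prod w D = prod w' D" by (rule prod.cong) (auto simp: assms)
  moreover have "prod x (monomers U D) = prod x' (monomers U D)" by (rule prod.cong) (auto simp: assms)
  ultimately show ?thesis unfolding md_weight_def by simp
qed

lemma lin_x:
  assumes U: "U \<subseteq> V" and p: "p \<in> U" and xp: "x p \<noteq> 0"
  shows "Zs E (x(p:=t)) w U P = t * (Zs E x w U (\<lambda>D. P D \<and> p \<notin> \<Union>D) / x p) + Zs E x w U (\<lambda>D. P D \<and> \<not> p \<notin> \<Union>D)"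
proof -
  have finU: "finite U" using U finV by (rule finite_subset)
  have 1: "Zs E (x(p:=t)) w U (\<lambda>D. P D \<and> p \<notin> \<Union>D) = t * (Zs E x w U (\<lambda>D. P D \<and> p \<notin> \<Union>D) / x p)"
  proof -
    have "md_weight U (x(p:=t)) w D = t * (md_weight U x w D / x p)" if "p \<notin> \<Union>D" for D
    proof -
      have pm: "p \<in> monomers U D" using p that by (simp add: monomers_def)
      have fm: "finite (monomers U D)" using finU by (simp add: monomers_def)
      have "prod (x(p:=t)) (monomers U D) = t * prod x (monomers U D - {p})"
      proof -
        have "prod (x(p:=t)) (monomers U D - {p}) = prod x (monomers U D - {p})"
          by (rule prod.cong) auto
        then show ?thesis using prod.remove[OF fm pm, of "x(p:=t)"] by simp
      qed
      moreover have "prod x (monomers U D) = x p * prod x (monomers U D - {p})"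
        using prod.remove[OF fm pm, of x] .
      ultimately show ?thesis unfolding md_weight_def using xp by (simp add: field_simps)
    qed
    then show ?thesis unfolding Zs_def
      by (simp add: sum_distrib_left sum_divide_distrib)
  qed
  have 2: "Zs E (x(p:=t)) w U (\<lambda>D. P D \<and> \<not> p \<notin> \<Union>D) = Zs E x w U (\<lambda>D. P D \<and> \<not> p \<notin> \<Union>D)"
    unfolding Zs_def
    by (rule sum.cong[OF refl], rule weight_cong) (auto simp: monomers_def)
  show ?thesis using Zs_split[of "x(p:=t)" w U P "\<lambda>D. p \<notin> \<Union>D"] 1 2 by simp
qed

lemma lin_w:
  assumes we: "w e \<noteq> 0"
  shows "Zs E x (w(e:=t)) U P = t * (Zs E x w U (\<lambda>D. P D \<and> e \<in> D) / w e) + Zs E x w U (\<lambda>D. P D \<and> e \<notin> D)"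
proof -
  have 1: "Zs E x (w(e:=t)) U (\<lambda>D. P D \<and> e \<in> D) = t * (Zs E x w U (\<lambda>D. P D \<and> e \<in> D) / w e)"
  proof -
    have "md_weight U x (w(e:=t)) D = t * (md_weight U x w D / w e)" if "e \<in> D" "is_matching E D" for D
    proof -
      have fD: "finite D" using that match_fin by simp
      have "prod (w(e:=t)) D = t * prod w (D - {e})"
      proof -
        have "prod (w(e:=t)) (D - {e}) = prod w (D - {e})"
          by (rule prod.cong) auto
        then show ?thesis using prod.remove[OF fD that(1), of "w(e:=t)"] by simp
      qed
      moreover have "prod w D = w e * prod w (D - {e})"
        using prod.remove[OF fD that(1), of w] .
      ultimately show ?thesis unfolding md_weight_def using we by (simp add: field_simps)
    qed
    then show ?thesis unfolding Zs_def
      by (simp add: sum_distrib_left sum_divide_distrib)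
  qed
  have 2: "Zs E x (w(e:=t)) U (\<lambda>D. P D \<and> e \<notin> D) = Zs E x w U (\<lambda>D. P D \<and> e \<notin> D)"
    unfolding Zs_def
    by (rule sum.cong[OF refl], rule weight_cong) auto
  show ?thesis using Zs_split[of x "w(e:=t)" U P "\<lambda>D. e \<in> D"] 1 2 by simp
qed

end

lemma deriv_ratio:
  fixes a b c d t0 :: real
  assumes f: "\<And>t. f t = (t*a + b)/(t*c + d)" and nz: "t0*c + d \<noteq> 0"
  shows "deriv f t0 = (a*d - b*c)/(t0*c+d)^2"
proof -
  have ff: "f = (\<lambda>t. (t*a + b)/(t*c + d))" using f by auto
  have "((\<lambda>t. (t*a + b)/(t*c + d)) has_real_derivative ((a*(t0*c+d) - (t0*a+b)*c)/(t0*c+d)^2)) (at t0)"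
    by (rule derivative_eq_intros refl | use nz in \<open>simp add: power2_eq_square\<close>)+
  then have "deriv f t0 = (a*(t0*c+d) - (t0*a+b)*c)/(t0*c+d)^2" unfolding ff by (rule DERIV_imp_deriv)
  also have "\<dots> = (a*d - b*c)/(t0*c+d)^2" by (simp add: algebra_simps)
  finally show ?thesis .
qed


lemma path_nth_edge: "is_path U E xs \<Longrightarrow> Suc i < length xs \<Longrightarrow> {xs!i, xs!Suc i} \<in> E"
  by (simp add: is_path_def)

lemma path_mono: "is_path U E xs \<Longrightarrow> set xs \<subseteq> U' \<Longrightarrow> is_path U' E xs"
  by (simp add: is_path_def)

lemma path_take: assumes "is_path U E xs" "0 < k" shows "is_path U E (take k xs)"
proof -
  have "xs \<noteq> []" using assms by (simp add: is_path_def)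
  then have "take k xs \<noteq> []" using assms(2) by simp
  moreover have "distinct (take k xs)" using assms by (simp add: is_path_def)
  moreover have "set (take k xs) \<subseteq> U" using assms set_take_subset by (metis is_path_def order_trans)
  moreover have "{take k xs ! i, take k xs ! Suc i} \<in> E" if "Suc i < length (take k xs)" for i
    using that assms(1) by (simp add: is_path_def)
  ultimately show ?thesis by (simp add: is_path_def)
qed

lemma path_drop: assumes "is_path U E xs" "k < length xs" shows "is_path U E (drop k xs)"
proof -
  have "drop k xs \<noteq> []" using assms(2) by simp
  moreover have "distinct (drop k xs)" using assms by (simp add: is_path_def)
  moreover have "set (drop k xs) \<subseteq> U" using assms set_drop_subset by (metis is_path_def order_trans)
  moreover have "{drop k xs ! i, drop k xs ! Suc i} \<in> E" if "Suc i < length (drop k xs)" for i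
  proof -
    have "Suc (k+i) < length xs" using that by simp
    then show ?thesis using assms(1) unfolding is_path_def by (simp add: add.commute)
  qed
  ultimately show ?thesis by (simp add: is_path_def)
qed

lemma path_append:
  assumes P: "is_path U E xs" and Q: "is_path U E ys" and dj: "set xs \<inter> set ys = {}"
    and e: "{last xs, hd ys} \<in> E"
  shows "is_path U E (xs @ ys)"
proof -
  have xs: "xs \<noteq> []" and ys: "ys \<noteq> []" using P Q by (auto simp: is_path_def)
  have "{(xs@ys) ! i, (xs@ys) ! Suc i} \<in> E" if i: "Suc i < length (xs @ ys)" for i
  proof (cases "Suc i < length xs")
    case True then show ?thesis using P by (simp add: nth_append is_path_def)
  next
    case False
    show ?thesis
    proof (cases "Suc i = length xs")
      case True
      then have ii: "i = length xs - 1" by simp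
      then have "(xs@ys) ! i = last xs" using xs by (simp add: nth_append last_conv_nth)
      moreover have "(xs@ys) ! Suc i = hd ys" using True ys by (simp add: nth_append hd_conv_nth)
      ultimately show ?thesis using e by simp
    next
      case False2: False
      then have le: "length xs \<le> i" using False by simp
      then have "Suc (i - length xs) < length ys" using i by simp
      then have "{ys ! (i - length xs), ys ! Suc (i - length xs)} \<in> E" using Q by (simp add: is_path_def)
      moreover have "Suc i - length xs = Suc (i - length xs)" using le by simp
      ultimately show ?thesis using le by (simp add: nth_append)
    qed
  qed
  then show ?thesis using P Q dj xs by (simp add: is_path_def)
qed

lemma path_rev: assumes "is_path U E xs" shows "is_path U E (rev xs)"
proof -
  have "{rev xs ! i, rev xs ! Suc i} \<in> E" if "Suc i < length (rev xs)" for i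
  proof -
    let ?j = "length xs - Suc (Suc i)"
    have j: "Suc ?j < length xs" using that by simp
    have "{xs ! ?j, xs ! Suc ?j} \<in> E" using assms j by (simp add: is_path_def)
    moreover have "rev xs ! i = xs ! Suc ?j" using that by (simp add: rev_nth Suc_diff_Suc)
    moreover have "rev xs ! Suc i = xs ! ?j" using that by (simp add: rev_nth)
    ultimately show ?thesis by (simp add: insert_commute)
  qed
  then show ?thesis using assms by (simp add: is_path_def)
qed

lemma path_single: "a \<in> U \<Longrightarrow> is_path U E [a]"
  by (simp add: is_path_def)

lemma path_snoc:
  assumes "is_path U E xs" "d \<in> U" "d \<notin> set xs" "{last xs, d} \<in> E"
  shows "is_path U E (xs @ [d])"
  using path_append[OF assms(1) path_single[OF assms(2)]] assms by simp

lemma path_hd_mem: "is_path U E xs \<Longrightarrow> hd xs \<in> set xs"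
  by (simp add: is_path_def)

lemma path_last_mem: "is_path U E xs \<Longrightarrow> last xs \<in> set xs"
  by (simp add: is_path_def)

lemma path_set: "is_path U E xs \<Longrightarrow> set xs \<subseteq> U"
  by (simp add: is_path_def)

lemma path_reach_extend:
  assumes P: "is_path U E xs" and h: "hd xs = a" and l: "last xs = c" and d: "d \<in> U" and e: "{c,d} \<in> E"
  shows "\<exists>ys. is_path U E ys \<and> hd ys = a \<and> last ys = d"
proof (cases "d \<in> set xs")
  case True
  then obtain i where i: "i < length xs" "xs ! i = d" by (meson in_set_conv_nth)
  have "is_path U E (take (Suc i) xs)" using path_take[OF P] by simp
  moreover have "hd (take (Suc i) xs) = a" using h i by (simp add: hd_conv_nth)
  moreover have "last (take (Suc i) xs) = d" using i by (simp add: take_Suc_conv_app_nth)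
  ultimately show ?thesis by blast
next
  case False
  have "xs \<noteq> []" using P by (simp add: is_path_def)
  then show ?thesis using path_snoc[OF P d False] e l h by (intro exI[of _ "xs @ [d]"]) simp
qed


locale tree = sgraph +
  assumes tr: "is_tree V E"
begin

lemma nocycle: "\<not> is_cycle V E xs" using tr by (auto simp: is_tree_def)

lemma cycle_contra:
  assumes ab: "{a,b} \<in> E" and P: "is_path V E P" "hd P = a" "2 \<le> length P" "P!1 \<noteq> b"
    and Q: "is_path V E Q" "hd Q = b" "a \<notin> set Q" and int: "set P \<inter> set Q \<noteq> {}"
  shows False
proof -
  have ex: "\<exists>i. i < length P \<and> P!i \<in> set Q" using int by (metis disjoint_iff in_set_conv_nth)
  define i where "i = (LEAST i. i < length P \<and> P!i \<in> set Q)"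
  have i: "i < length P" "P!i \<in> set Q" using LeastI_ex[OF ex] unfolding i_def by auto
  have imin: "P!k \<notin> set Q" if "k < i" for k
  proof
    assume "P!k \<in> set Q"
    then have "i \<le> k" unfolding i_def using that i(1) by (intro Least_le) simp
    with that show False by simp
  qed
  have Pne: "P \<noteq> []" using P(3) by auto
  have P0: "P!0 = a" using P(2) Pne by (metis hd_conv_nth)
  have i0: "i \<noteq> 0"
  proof
    assume "i = 0"
    then show False using i(2) P0 Q(3) by simp
  qed
  obtain j where j: "j < length Q" "Q!j = P!i" using i(2) by (metis in_set_conv_nth)
  have Q0: "Q!0 = b" using Q(1,2) by (simp add: hd_conv_nth is_path_def)
  have dQ: "distinct Q" and dP: "distinct P" using P Q by (simp_all add: is_path_def)
  have tP: "is_path V E (take (Suc i) P)" using path_take[OF P(1)] by simp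
  have hdC: "hd (take (Suc i) P) = a" using P0 P(2,3) by (simp add: hd_conv_nth)
  have lastP: "last (take (Suc i) P) = P!i" using i(1) by (simp add: take_Suc_conv_app_nth)
  show False
  proof (cases "j = 0")
    case True
    then have Pib: "P!i = b" using j Q0 by simp
    then have "i \<noteq> 1" using P(4) by auto
    then have "3 \<le> length (take (Suc i) P)" using i0 i(1) by simp
    moreover have "{last (take (Suc i) P), hd (take (Suc i) P)} \<in> E"
      using lastP hdC Pib ab by (simp add: insert_commute)
    ultimately have "is_cycle V E (take (Suc i) P)" using tP by (simp add: is_cycle_def)
    then show False using nocycle by blast
  next
    case False
    let ?R = "rev (take j Q)"
    have R: "is_path V E ?R" using path_rev[OF path_take[OF Q(1)]] False by simp
    have dj: "set (take (Suc i) P) \<inter> set ?R = {}"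
    proof (rule ccontr)
      assume "set (take (Suc i) P) \<inter> set ?R \<noteq> {}"
      then obtain y where y1: "y \<in> set (take (Suc i) P)" and y2: "y \<in> set (take j Q)" by auto
      obtain m where m: "m < Suc i" "P!m = y" using y1 i(1) by (auto simp: in_set_conv_nth)
      obtain k where k: "k < j" "Q!k = y" using y2 j(1) by (auto simp: in_set_conv_nth)
      show False
      proof (cases "m < i")
        case True then show False using imin[OF True] m k j(1) by (metis less_trans nth_mem)
      next
        case False
        then have "m = i" using m by simp
        then have "Q!k = Q!j" using m k j by simp
        then have "k = j" using dQ j(1) k(1) by (simp add: nth_eq_iff_index_eq)
        then show False using k by simp
      qed
    qed
    have tj: "take j Q = take (j-1) Q @ [Q!(j-1)]" using False j(1) take_Suc_conv_app_nth[of "j-1" Q] by simp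
    have hdR: "hd ?R = Q!(j-1)" by (subst tj) simp
    have eQ: "{Q!(j-1), Q!j} \<in> E" using path_nth_edge[OF Q(1), of "j-1"] False j(1) by simp
    have conn: "{last (take (Suc i) P), hd ?R} \<in> E" using lastP hdR eQ j(2) by (simp add: insert_commute)
    have C: "is_path V E (take (Suc i) P @ ?R)" by (rule path_append[OF tP R dj conn])
    have lastR: "last ?R = b" using False j(1) Q(2) by (simp add: last_rev)
    have "3 \<le> length (take (Suc i) P @ ?R)" using False i0 i(1) j(1) by simp
    moreover have "{last (take (Suc i) P @ ?R), hd (take (Suc i) P @ ?R)} \<in> E"
    proof -
      have Rne: "?R \<noteq> []" using False j(1) by (cases Q) auto
      have l: "last (take (Suc i) P @ ?R) = b" using Rne lastR by simp
      have h: "hd (take (Suc i) P @ ?R) = a" using hdC Pne by simp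
      show ?thesis unfolding l h using ab by (simp add: insert_commute)
    qed
    ultimately have "is_cycle V E (take (Suc i) P @ ?R)" using C by (simp add: is_cycle_def)
    then show False using nocycle by blast
  qed
qed

definition clique :: "'a set \<Rightarrow> bool" where
  "clique T \<longleftrightarrow> (\<forall>t\<in>T. \<forall>t'\<in>T. t \<noteq> t' \<longrightarrow> {t,t'} \<in> E)"

lemma no_two_paths:
  assumes T: "clique T" and ab: "{a,b} \<in> E"
    and P: "is_path V E P" "hd P = a" "last P \<in> T" "a \<notin> T" "P!1 \<noteq> b"
    and Q: "is_path V E Q" "hd Q = b" "last Q \<in> T" "a \<notin> set Q"
  shows False
proof -
  have Pne: "P \<noteq> []" using P(1) by (simp add: is_path_def)
  have "length P \<noteq> 1"
  proof
    assume "length P = 1"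
    then have "last P = hd P" using Pne by (simp add: hd_conv_nth last_conv_nth)
    then show False using P(2,3,4) by simp
  qed
  moreover have "length P \<noteq> 0" using Pne by simp
  ultimately have l2: "2 \<le> length P" by arith
  show False
  proof (cases "set P \<inter> set Q = {}")
    case False then show False using cycle_contra[OF ab P(1,2) l2 P(5) Q(1,2,4)] by blast
  next
    case True
    have lP: "last P \<in> set P" by (rule path_last_mem[OF P(1)])
    have lQ: "last Q \<in> set Q" by (rule path_last_mem[OF Q(1)])
    have lPQ: "last P \<noteq> last Q"
    proof
      assume "last P = last Q"
      then have "last P \<in> set P \<inter> set Q" using lP lQ by simp
      then show False using True by simp
    qed
    have e: "{last P, last Q} \<in> E" using T P(3) Q(3) lPQ unfolding clique_def by simp
    have nin: "last Q \<notin> set P"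
    proof
      assume "last Q \<in> set P"
      then have "last Q \<in> set P \<inter> set Q" using lQ by simp
      then show False using True by simp
    qed
    have lQV: "last Q \<in> V" using path_set[OF Q(1)] lQ by (rule subsetD)
    have P': "is_path V E (P @ [last Q])" by (rule path_snoc[OF P(1) lQV nin e])
    have "hd (P @ [last Q]) = a" using P(2) Pne by simp
    moreover have "(P @ [last Q]) ! 1 \<noteq> b" using P(5) l2 by (simp add: nth_append)
    moreover have "2 \<le> length (P @ [last Q])" using l2 by simp
    moreover have "set (P @ [last Q]) \<inter> set Q \<noteq> {}" using lQ by auto
    ultimately show False using cycle_contra[OF ab P' _ _ _ Q(1,2,4)] by blast
  qed
qed

lemma factor:
  assumes "A \<union> B \<subseteq> V" "A \<inter> B = {}" "\<forall>c\<in>A. \<forall>d\<in>B. {c,d} \<notin> E"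
  shows "Z x w (A \<union> B) = Z x w A * Z x w B"
  using assms
proof (induction "card A" arbitrary: A rule: less_induct)
  case less
  have finA: "finite A" using less.prems(1) finV by (meson finite_subset le_sup_iff)
  show ?case
  proof (cases "A = {}")
    case True then show ?thesis by (simp add: Z_empty)
  next
    case False
    then obtain a where a: "a \<in> A" by blast
    let ?N = "{b\<in>A. b \<noteq> a \<and> {a,b} \<in> E}"
    have N: "{b\<in>A \<union> B. b \<noteq> a \<and> {a,b} \<in> E} = ?N" using less.prems(3) a by blast
    have c1: "card (A - {a}) < card A" using finA a by (rule card_Diff1_less)
    have IH1: "Z x w ((A - {a}) \<union> B) = Z x w (A - {a}) * Z x w B"
      by (rule less.hyps[OF c1]) (use less.prems a finA in auto)
    have IH2: "Z x w ((A - {a,b}) \<union> B) = Z x w (A - {a,b}) * Z x w B" if "b \<in> ?N" for b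
      by (rule less.hyps) (use less.prems a finA in \<open>auto intro!: psubset_card_mono\<close>)
    have s1: "A \<union> B - {a} = (A - {a}) \<union> B" using less.prems(2) a by blast
    have s2: "A \<union> B - {a,b} = (A - {a,b}) \<union> B" if "b \<in> ?N" for b using less.prems(2) a that by blast
    have "Z x w (A \<union> B) = x a * Z x w (A \<union> B - {a}) + (\<Sum>b\<in>?N. w {a,b} * Z x w (A \<union> B - {a,b}))"
      using recursion[of "A \<union> B" a x w] less.prems(1) a N by simp
    also have "\<dots> = (x a * Z x w (A - {a}) + (\<Sum>b\<in>?N. w {a,b} * Z x w (A - {a,b}))) * Z x w B"
    proof -
      have S: "(\<Sum>b\<in>?N. w {a,b} * Z x w (A \<union> B - {a,b})) = (\<Sum>b\<in>?N. w {a,b} * Z x w (A - {a,b})) * Z x w B"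
        unfolding sum_distrib_right by (rule sum.cong[OF refl]) (simp add: s2 IH2)
      show ?thesis by (simp add: s1 IH1 S algebra_simps)
    qed
    also have "\<dots> = Z x w A * Z x w B"
      using recursion[of A a x w] less.prems(1) a by simp
    finally show ?thesis .
  qed
qed

definition g :: "('a \<Rightarrow> real) \<Rightarrow> ('a set \<Rightarrow> real) \<Rightarrow> 'a set \<Rightarrow> 'a \<Rightarrow> 'a set \<Rightarrow> real" where
  "g x w U a T = Z x w (U - {a}) * Z x w (U - T) - Z x w U * Z x w (U - {a} - T)"

lemma g_zero:
  assumes U: "U \<subseteq> V" and a: "a \<in> U" and T: "T \<subseteq> U" and aT: "a \<notin> T"
    and np: "\<forall>xs. is_path U E xs \<and> hd xs = a \<longrightarrow> last xs \<notin> T"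
  shows "g x w U a T = 0"
proof -
  define C where "C = {c\<in>U. \<exists>xs. is_path U E xs \<and> hd xs = a \<and> last xs = c}"
  define B where "B = U - C"
  have aC: "a \<in> C" unfolding C_def using a path_single[OF a] by (intro CollectI conjI exI[of _ "[a]"]) auto
  have TB: "T \<subseteq> B" unfolding B_def C_def using np T by blast
  have CU: "C \<subseteq> U" unfolding C_def by blast
  have noedge: "\<forall>c\<in>C'. \<forall>d\<in>B'. {c,d} \<notin> E" if CC: "C' \<subseteq> C" and BB: "B' \<subseteq> B" for C' B'
  proof (intro ballI notI)
    fix c d assume c: "c \<in> C'" and d: "d \<in> B'" and e: "{c,d} \<in> E"
    have "c \<in> C" using c CC by blast
    then obtain xs where xs: "is_path U E xs" "hd xs = a" "last xs = c" unfolding C_def by blast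
    have dU: "d \<in> U" using d BB unfolding B_def by blast
    have "\<exists>ys. is_path U E ys \<and> hd ys = a \<and> last ys = d"
      by (rule path_reach_extend[OF xs dU e])
    then have "d \<in> C" using dU unfolding C_def by blast
    then show False using d BB unfolding B_def by blast
  qed
  have UV: "C \<union> B \<subseteq> V" using U CU unfolding B_def by blast
  have e1: "U - {a} = (C - {a}) \<union> B" using aC CU unfolding B_def by blast
  have e2: "U - T = C \<union> (B - T)" using TB CU unfolding B_def by blast
  have e3: "U - {a} - T = (C - {a}) \<union> (B - T)" using TB aC CU unfolding B_def by blast
  have e4: "U = C \<union> B" using CU unfolding B_def by blast
  have f1: "Z x w (U - {a}) = Z x w (C - {a}) * Z x w B"
    unfolding e1 by (rule factor) (use UV noedge in \<open>auto simp: B_def\<close>)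
  have f2: "Z x w (U - T) = Z x w C * Z x w (B - T)"
    unfolding e2 by (rule factor) (use UV noedge in \<open>auto simp: B_def\<close>)
  have f3: "Z x w (U - {a} - T) = Z x w (C - {a}) * Z x w (B - T)"
    unfolding e3 by (rule factor) (use UV noedge in \<open>auto simp: B_def\<close>)
  have f4: "Z x w U = Z x w C * Z x w B"
    by (subst e4, rule factor) (use UV noedge in \<open>auto simp: B_def\<close>)
  show ?thesis unfolding g_def f1 f2 f3 f4 by simp
qed

lemma g_rec:
  assumes U: "U \<subseteq> V" and a: "a \<in> U" and aT: "a \<notin> T"
  shows "g x w U a T = - (\<Sum>b\<in>{b\<in>U. b \<noteq> a \<and> {a,b} \<in> E} - T. w {a,b} * g x w (U - {a}) b T)
                       - (\<Sum>b\<in>{b\<in>U. b \<noteq> a \<and> {a,b} \<in> E} \<inter> T. w {a,b} * Z x w (U - {a} - {b}) * Z x w (U - {a} - T))"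
proof -
  define N where "N = {b\<in>U. b \<noteq> a \<and> {a,b} \<in> E}"
  have finN: "finite N" unfolding N_def using U finV by (simp add: finite_subset)
  have NT: "{b\<in>U - T. b \<noteq> a \<and> {a,b} \<in> E} = N - T" unfolding N_def by blast
  have r1: "Z x w U = x a * Z x w (U - {a}) + (\<Sum>b\<in>N. w {a,b} * Z x w (U - {a} - {b}))"
  proof -
    have "\<And>b. U - {a,b} = U - {a} - {b}" by blast
    then show ?thesis using recursion[OF U a, of x w] unfolding N_def by simp
  qed
  have r2: "Z x w (U - T) = x a * Z x w (U - {a} - T) + (\<Sum>b\<in>N - T. w {a,b} * Z x w (U - {a} - {b} - T))"
  proof -
    have "U - T \<subseteq> V" using U by blast
    moreover have "a \<in> U - T" using a aT by blast
    moreover have "\<And>b. U - T - {a,b} = U - {a} - {b} - T" by blast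
    moreover have "U - T - {a} = U - {a} - T" by blast
    ultimately show ?thesis using recursion[of "U - T" a x w] NT by simp
  qed
  have sp: "(\<Sum>b\<in>N. w {a,b} * Z x w (U - {a} - {b})) = (\<Sum>b\<in>N - T. w {a,b} * Z x w (U - {a} - {b})) + (\<Sum>b\<in>N \<inter> T. w {a,b} * Z x w (U - {a} - {b}))"
    using sum.Int_Diff[OF finN, of _ T] by (simp add: add.commute)
  have "g x w U a T = Z x w (U - {a}) * Z x w (U - T) - Z x w U * Z x w (U - {a} - T)" unfolding g_def ..
  also have "\<dots> = (\<Sum>b\<in>N - T. w {a,b} * (Z x w (U - {a}) * Z x w (U - {a} - {b} - T) - Z x w (U - {a} - {b}) * Z x w (U - {a} - T)))
       - (\<Sum>b\<in>N \<inter> T. w {a,b} * Z x w (U - {a} - {b}) * Z x w (U - {a} - T))"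
    unfolding r1 r2 sp by (simp add: algebra_simps sum_distrib_left sum_distrib_right sum_subtractf)
  also have "\<dots> = - (\<Sum>b\<in>N - T. w {a,b} * g x w (U - {a}) b T)
       - (\<Sum>b\<in>N \<inter> T. w {a,b} * Z x w (U - {a} - {b}) * Z x w (U - {a} - T))"
    unfolding g_def by (simp add: algebra_simps sum_negf[symmetric])
  finally show ?thesis unfolding N_def .
qed

end

context tree begin

lemma g_sign:
  assumes xp: "\<forall>v\<in>V. x v > 0" and wp: "\<forall>e\<in>E. w e > 0" and T: "clique T"
  shows "is_path U E P \<Longrightarrow> U \<subseteq> V \<Longrightarrow> T \<subseteq> U \<Longrightarrow> hd P = a \<Longrightarrow> last P \<in> T \<Longrightarrow> a \<notin> T
     \<Longrightarrow> \<forall>y\<in>set (butlast P). y \<notin> T \<Longrightarrow> (-1)^(length P - 1) * g x w U a T \<ge> 0"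
proof (induction P arbitrary: U a)
  case Nil then show ?case by (simp add: is_path_def)
next
  case (Cons a' P')
  have aa: "a' = a" using Cons.prems(4) by simp
  have P'ne: "P' \<noteq> []"
  proof
    assume "P' = []"
    then show False using Cons.prems(4,5,6) by simp
  qed
  define y1 where "y1 = hd P'"
  have dist: "distinct (a # P')" using Cons.prems(1) aa by (simp add: is_path_def)
  have aU: "a \<in> U" using Cons.prems(1) aa by (simp add: is_path_def)
  have P'U: "is_path U E P'" using path_drop[OF Cons.prems(1), of 1] P'ne by simp
  have P'Ua: "is_path (U - {a}) E P'"
    by (rule path_mono[OF P'U]) (use path_set[OF P'U] dist in auto)
  have y1P: "y1 = (a # P') ! 1" using P'ne unfolding y1_def by (simp add: hd_conv_nth)
  have ey1: "{a, y1} \<in> E" using path_nth_edge[OF Cons.prems(1), of 0] P'ne aa y1P by simp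
  have y1U: "y1 \<in> U" using path_set[OF P'U] P'ne unfolding y1_def by (meson hd_in_set subsetD)
  have y1a: "y1 \<noteq> a" using dist P'ne unfolding y1_def by (metis distinct.simps(2) list.set_sel(1))
  have PV: "is_path V E (a # P')"
    using path_mono[OF Cons.prems(1)] path_set[OF Cons.prems(1)] Cons.prems(2) aa by blast
  have lastP: "last (a # P') \<in> T" using Cons.prems(5) aa by simp
  let ?N = "{b\<in>U. b \<noteq> a \<and> {a,b} \<in> E}"
  have UaV: "U - {a} \<subseteq> V" using Cons.prems(2) by blast
  have TUa: "T \<subseteq> U - {a}" using Cons.prems(3,6) by blast
  have zero: "g x w (U - {a}) b T = 0" if b: "b \<in> ?N" "b \<notin> T" "b \<noteq> y1" for b
  proof (rule g_zero[OF UaV _ TUa b(2)])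
    show "b \<in> U - {a}" using b by blast
    show "\<forall>xs. is_path (U - {a}) E xs \<and> hd xs = b \<longrightarrow> last xs \<notin> T"
    proof (intro allI impI notI)
      fix xs assume xs: "is_path (U - {a}) E xs \<and> hd xs = b" and l: "last xs \<in> T"
      have QV: "is_path V E xs" using path_mono[of "U - {a}" E xs V] path_set[of "U - {a}" E xs] xs UaV by blast
      have aQ: "a \<notin> set xs" using path_set[of "U - {a}" E xs] xs by blast
      have eab: "{a,b} \<in> E" using b by simp
      show False
        by (rule no_two_paths[OF T eab PV _ lastP Cons.prems(6) _ QV _ l aQ]) (use y1P b(3) xs in auto)
    qed
  qed
  have S2nn: "0 \<le> (\<Sum>b\<in>?N \<inter> T. w {a,b} * Z x w (U - {a} - {b}) * Z x w (U - {a} - T))"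
  proof (rule sum_nonneg)
    fix b assume "b \<in> ?N \<inter> T"
    then have "w {a,b} > 0" using wp by simp
    moreover have "Z x w (U - {a} - {b}) \<ge> 0" by (rule Zs_nonneg[OF _ xp wp]) (use Cons.prems(2) in blast)
    moreover have "Z x w (U - {a} - T) \<ge> 0" by (rule Zs_nonneg[OF _ xp wp]) (use Cons.prems(2) in blast)
    ultimately show "0 \<le> w {a,b} * Z x w (U - {a} - {b}) * Z x w (U - {a} - T)" by simp
  qed
  have grec: "g x w U a T = - (\<Sum>b\<in>?N - T. w {a,b} * g x w (U - {a}) b T)
                       - (\<Sum>b\<in>?N \<inter> T. w {a,b} * Z x w (U - {a} - {b}) * Z x w (U - {a} - T))"
    by (rule g_rec[OF Cons.prems(2) aU Cons.prems(6)])
  show ?case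
  proof (cases "y1 \<in> T")
    case True
    have lenP': "length P' = 1"
    proof (rule ccontr)
      assume "length P' \<noteq> 1"
      moreover have "length P' \<noteq> 0" using P'ne by simp
      ultimately have "2 \<le> length P'" by arith
      obtain c rest where cr: "P' = c # rest" using P'ne by (meson neq_Nil_conv)
      then have "rest \<noteq> []" using \<open>2 \<le> length P'\<close> by (cases rest) auto
      then have "y1 \<in> set (butlast P')" unfolding y1_def cr by simp
      then have "y1 \<in> set (butlast (a' # P'))" using P'ne by simp
      then show False using Cons.prems(7) True by blast
    qed
    have "(\<Sum>b\<in>?N - T. w {a,b} * g x w (U - {a}) b T) = 0"
    proof (rule sum.neutral, rule ballI)
      fix b assume b: "b \<in> ?N - T"
      then have "b \<noteq> y1" using True by blast
      then have "g x w (U - {a}) b T = 0" using zero b by blast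
      then show "w {a,b} * g x w (U - {a}) b T = 0" by simp
    qed
    then have "g x w U a T \<le> 0" using grec S2nn by simp
    then show ?thesis using lenP' by simp
  next
    case False
    have NT: "?N \<inter> T = {}"
    proof (rule ccontr)
      assume "?N \<inter> T \<noteq> {}"
      then obtain b where b: "b \<in> ?N" "b \<in> T" by blast
      have eab: "{a,b} \<in> E" using b by simp
      have bV: "b \<in> V" using b Cons.prems(2) by blast
      have Q: "is_path V E [b]" by (rule path_single[OF bV])
      have "y1 \<noteq> b" using False b(2) by blast
      then have n1: "(a # P') ! 1 \<noteq> b" using y1P by simp
      have n2: "a \<notin> set [b]" using b(1) by auto
      show False
        by (rule no_two_paths[OF T eab PV _ lastP Cons.prems(6) n1 Q _ _ n2]) (use b(2) in simp_all)
    qed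
    have finN: "finite ?N" using Cons.prems(2) finV by (simp add: finite_subset)
    have y1N: "y1 \<in> ?N - T" using y1U y1a ey1 False by simp
    have "(\<Sum>b\<in>?N - T. w {a,b} * g x w (U - {a}) b T) = w {a,y1} * g x w (U - {a}) y1 T
            + (\<Sum>b\<in>?N - T - {y1}. w {a,b} * g x w (U - {a}) b T)"
      using sum.remove[of "?N - T" y1] finN y1N by simp
    also have "(\<Sum>b\<in>?N - T - {y1}. w {a,b} * g x w (U - {a}) b T) = 0"
    proof (rule sum.neutral, rule ballI)
      fix b assume b: "b \<in> ?N - T - {y1}"
      then have "g x w (U - {a}) b T = 0" using zero by blast
      then show "w {a,b} * g x w (U - {a}) b T = 0" by simp
    qed
    finally have S1: "(\<Sum>b\<in>?N - T. w {a,b} * g x w (U - {a}) b T) = w {a,y1} * g x w (U - {a}) y1 T" by simp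
    have gg: "g x w U a T = - (w {a,y1} * g x w (U - {a}) y1 T)" using grec S1 NT by simp
    have IH: "(-1)^(length P' - 1) * g x w (U - {a}) y1 T \<ge> 0"
    proof (rule Cons.IH[OF P'Ua UaV TUa])
      show "hd P' = y1" unfolding y1_def ..
      show "last P' \<in> T" using Cons.prems(5) P'ne by simp
      show "y1 \<notin> T" by (rule False)
      have "set (butlast P') \<subseteq> set (butlast (a' # P'))" using P'ne by auto
      then show "\<forall>y\<in>set (butlast P'). y \<notin> T" using Cons.prems(7) by blast
    qed
    have wy: "w {a,y1} > 0" using wp ey1 by simp
    have "0 < length P'" using P'ne by simp
    then obtain k where k: "length P' = Suc k" using gr0_implies_Suc by blast
    have e1: "length (a' # P') - 1 = Suc k" using k by simp
    have e2: "length P' - 1 = k" using k by simp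
    have "(-1)^(length (a' # P') - 1) * g x w U a T = w {a,y1} * ((-1)^(length P' - 1) * g x w (U - {a}) y1 T)"
      unfolding gg e1 e2 by simp
    also have "\<dots> \<ge> 0" using wy IH by simp
    finally show ?thesis .
  qed
qed

end

context tree begin

lemma conn: "connected_graph V E" using tr by (simp add: is_tree_def)

lemma gdist_path:
  assumes "a \<in> V" "b \<in> V"
  shows "\<exists>xs. is_path V E xs \<and> hd xs = a \<and> last xs = b \<and> length xs = Suc (gdist V E a b)"
proof -
  obtain xs where xs: "is_path V E xs" "hd xs = a" "last xs = b" using conn assms unfolding connected_graph_def by blast
  have ne: "xs \<noteq> []" using xs(1) by (simp add: is_path_def)
  have ex: "\<exists>n xs. is_path V E xs \<and> hd xs = a \<and> last xs = b \<and> length xs = Suc n"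
    using xs ne by (intro exI[of _ "length xs - 1"] exI[of _ xs]) simp
  show ?thesis unfolding gdist_def by (rule LeastI_ex[OF ex])
qed

lemma gdist_le:
  assumes "is_path V E xs" "hd xs = a" "last xs = b"
  shows "gdist V E a b \<le> length xs - 1"
proof -
  have ne: "xs \<noteq> []" using assms(1) by (simp add: is_path_def)
  have "\<exists>ys. is_path V E ys \<and> hd ys = a \<and> last ys = b \<and> length ys = Suc (length xs - 1)"
    using assms ne by (intro exI[of _ xs]) simp
  then show ?thesis unfolding gdist_def by (rule Least_le)
qed

lemma gdist_self: assumes "a \<in> V" shows "gdist V E a a = 0"
proof -
  have "gdist V E a a \<le> length [a] - 1" by (rule gdist_le[OF path_single[OF assms]]) simp_all
  then show ?thesis by simp
qed

lemma first_hit_aux: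
  assumes a: "a \<in> V" and p: "p \<in> V" and v: "v \<in> V" and apv: "a \<notin> {p,v}"
    and le: "gdist V E a p \<le> gdist V E a v"
  shows "\<exists>P. is_path V E P \<and> hd P = a \<and> last P \<in> {p,v} \<and> (\<forall>y\<in>set (butlast P). y \<notin> {p,v})
           \<and> length P = Suc (min (gdist V E a p) (gdist V E a v))"
proof -
  obtain P where P: "is_path V E P" "hd P = a" "last P = p" "length P = Suc (gdist V E a p)"
    using gdist_path[OF a p] by blast
  have ne: "P \<noteq> []" using P(1) by (simp add: is_path_def)
  have dP: "distinct P" using P(1) by (simp add: is_path_def)
  have "y \<notin> {p,v}" if y: "y \<in> set (butlast P)" for y
  proof -
    obtain k where k: "k < length (butlast P)" "butlast P ! k = y" using y by (meson in_set_conv_nth)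
    have k': "k < length P - 1" "P ! k = y" using k by (simp_all add: nth_butlast)
    have "y \<noteq> p"
    proof
      assume "y = p"
      then have "P ! k = P ! (length P - 1)" using k' P(3) ne by (simp add: last_conv_nth)
      then have "k = length P - 1" using dP k'(1) by (simp add: nth_eq_iff_index_eq)
      then show False using k'(1) by simp
    qed
    moreover have "y \<noteq> v"
    proof
      assume "y = v"
      have tp: "is_path V E (take (Suc k) P)" using path_take[OF P(1)] by simp
      have "hd (take (Suc k) P) = a" using P(2) ne by simp
      moreover have "last (take (Suc k) P) = v" using k' \<open>y = v\<close> by (simp add: take_Suc_conv_app_nth)
      ultimately have "gdist V E a v \<le> length (take (Suc k) P) - 1" using gdist_le[OF tp] by blast
      then have "gdist V E a v \<le> k" using k' by simp
      then show False using k' le P(4) by simp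
    qed
    ultimately show ?thesis by simp
  qed
  then show ?thesis using P le by (intro exI[of _ P]) (simp add: min_def)
qed

lemma first_hit:
  assumes a: "a \<in> V" and p: "p \<in> V" and v: "v \<in> V" and apv: "a \<notin> {p,v}"
  shows "\<exists>P. is_path V E P \<and> hd P = a \<and> last P \<in> {p,v} \<and> (\<forall>y\<in>set (butlast P). y \<notin> {p,v})
           \<and> length P = Suc (min (gdist V E a p) (gdist V E a v))"
proof (cases "gdist V E a p \<le> gdist V E a v")
  case True then show ?thesis using first_hit_aux[OF a p v apv] by blast
next
  case False
  then have "gdist V E a v \<le> gdist V E a p" by simp
  from first_hit_aux[OF a v p _ this] apv obtain P where
    "is_path V E P \<and> hd P = a \<and> last P \<in> {v,p} \<and> (\<forall>y\<in>set (butlast P). y \<notin> {v,p})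
           \<and> length P = Suc (min (gdist V E a v) (gdist V E a p))" by (auto simp: insert_commute)
  then show ?thesis by (intro exI[of _ P]) (auto simp: insert_commute min.commute)
qed

lemma gsign:
  assumes xp: "\<forall>v\<in>V. x v > 0" and wp: "\<forall>e\<in>E. w e > 0"
    and a: "a \<in> V" and p: "p \<in> V" and v: "v \<in> V" and apv: "a \<notin> {p,v}"
    and cl: "p = v \<or> {p,v} \<in> E"
  shows "(-1)^(min (gdist V E a p) (gdist V E a v)) * g x w V a {p,v} \<ge> 0"
proof -
  obtain P where P: "is_path V E P" "hd P = a" "last P \<in> {p,v}" "\<forall>y\<in>set (butlast P). y \<notin> {p,v}"
     "length P = Suc (min (gdist V E a p) (gdist V E a v))"
    using first_hit[OF a p v apv] by blast
  have T: "clique {p,v}" using cl unfolding clique_def by (auto simp: insert_commute)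
  have "(-1)^(length P - 1) * g x w V a {p,v} \<ge> 0"
    by (rule g_sign[OF xp wp T P(1) order_refl _ P(2,3) apv P(4)]) (use p v in blast)
  then show ?thesis using P(5) by simp
qed

end

context sgraph begin

lemma match_sub: "is_matching E D \<Longrightarrow> \<Union>D \<subseteq> V"
  using EPow by (auto simp: is_matching_def)

lemma mdZ_eq: "md_Z V E x w = Z x w V"
  unfolding md_Z_def Zs_def using match_sub by (intro sum.cong) auto

lemma mdR_eq: assumes "a \<in> V" shows "md_R V E x w a = Zs E x w V (\<lambda>D. a \<notin> \<Union>D) / Z x w V"
proof -
  have "{D. is_matching E D \<and> a \<in> monomers V D} = {D. is_matching E D \<and> \<Union>D \<subseteq> V \<and> a \<notin> \<Union>D}"
    using match_sub assms unfolding monomers_def by blast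
  then show ?thesis unfolding md_R_def mdZ_eq by (simp add: Zs_def)
qed

lemma mdE_eq: "md_E V E x w e = Zs E x w V (\<lambda>D. e \<in> D) / Z x w V"
proof -
  have "{D. is_matching E D \<and> e \<in> D} = {D. is_matching E D \<and> \<Union>D \<subseteq> V \<and> e \<in> D}"
    using match_sub by blast
  then show ?thesis unfolding md_E_def mdZ_eq by (simp add: Zs_def)
qed

lemma prod_vv:
  assumes "a \<in> V" "b \<in> V" "a \<noteq> b"
  shows "Zs E x w V (\<lambda>D. a \<notin> \<Union>D \<and> b \<notin> \<Union>D) = x a * x b * Z x w (V - {a} - {b})"
proof -
  have "Zs E x w V (\<lambda>D. a \<notin> \<Union>D \<and> b \<notin> \<Union>D) = Zs E x w V (\<lambda>D. {a,b} \<inter> \<Union>D = {} \<and> {} \<subseteq> D)"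
    by (rule Zs_cong) auto
  also have "\<dots> = prod x {a,b} * prod w {} * Z x w (V - {a,b} - \<Union>{})"
    by (rule remove) (use assms in \<open>auto simp: is_matching_def\<close>)
  also have "V - {a,b} - \<Union>{} = V - {a} - {b}" by blast
  finally show ?thesis using assms by simp
qed

lemma prod_ve:
  assumes "a \<in> V" "e \<in> E" "a \<notin> e"
  shows "Zs E x w V (\<lambda>D. a \<notin> \<Union>D \<and> e \<in> D) = x a * w e * Z x w (V - {a} - e)"
proof -
  have "Zs E x w V (\<lambda>D. a \<notin> \<Union>D \<and> e \<in> D) = Zs E x w V (\<lambda>D. {a} \<inter> \<Union>D = {} \<and> {e} \<subseteq> D)"
    by (rule Zs_cong) auto
  also have "\<dots> = prod x {a} * prod w {e} * Z x w (V - {a} - \<Union>{e})"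
    by (rule remove) (use assms EPow in \<open>auto simp: is_matching_def\<close>)
  finally show ?thesis by simp
qed

lemma prod_ee:
  assumes "f \<in> E" "e \<in> E" "f \<inter> e = {}"
  shows "Zs E x w V (\<lambda>D. f \<in> D \<and> e \<in> D) = w f * w e * Z x w (V - f - e)"
proof -
  have fe: "f \<noteq> e" using assms edge_ne by blast
  have "Zs E x w V (\<lambda>D. f \<in> D \<and> e \<in> D) = Zs E x w V (\<lambda>D. {} \<inter> \<Union>D = {} \<and> {f,e} \<subseteq> D)"
    by (rule Zs_cong) auto
  also have "\<dots> = prod x {} * prod w {f,e} * Z x w (V - {} - \<Union>{f,e})"
  proof (rule remove)
    show "is_matching E {f,e}" using assms fe by (auto simp: is_matching_def)
  qed (use assms EPow in auto)
  also have "V - {} - \<Union>{f,e} = V - f - e" by blast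
  finally show ?thesis using fe by simp
qed

lemma Zs_empty: "(\<And>D. is_matching E D \<Longrightarrow> \<not> P D) \<Longrightarrow> Zs E x w U P = 0"
  unfolding Zs_def by (rule sum.neutral) auto

lemma deriv_x:
  assumes p: "p \<in> V" and xp: "\<forall>v\<in>V. x v > 0" and wp: "\<forall>e\<in>E. w e > 0"
  shows "deriv (\<lambda>t. Zs E (x(p:=t)) w V P / Z (x(p:=t)) w V) (x p)
     = (Zs E x w V (\<lambda>D. P D \<and> p \<notin> \<Union>D) * Z x w V - Zs E x w V P * Zs E x w V (\<lambda>D. p \<notin> \<Union>D)) / (x p * (Z x w V)^2)"
proof -
  define A where "A = Zs E x w V (\<lambda>D. P D \<and> p \<notin> \<Union>D)"
  define B where "B = Zs E x w V (\<lambda>D. P D \<and> \<not> p \<notin> \<Union>D)"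
  define C where "C = Zs E x w V (\<lambda>D. p \<notin> \<Union>D)"
  define Dd where "Dd = Zs E x w V (\<lambda>D. \<not> p \<notin> \<Union>D)"
  have x0: "x p > 0" using xp p by blast
  have ZCD: "Z x w V = C + Dd" unfolding C_def Dd_def using Zs_split[of x w V "\<lambda>_. True" "\<lambda>D. p \<notin> \<Union>D"] by simp
  have PAB: "Zs E x w V P = A + B" unfolding A_def B_def by (rule Zs_split)
  have Zp: "Z x w V > 0" by (rule Z_pos[OF order_refl xp wp])
  have f: "Zs E (x(p:=t)) w V P / Z (x(p:=t)) w V = (t * (A / x p) + B) / (t * (C / x p) + Dd)" for t
    using lin_x[OF order_refl p, of x t w P] lin_x[OF order_refl p, of x t w "\<lambda>_. True"] x0
    unfolding A_def B_def C_def Dd_def by simp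
  have nz: "x p * (C / x p) + Dd \<noteq> 0" using x0 ZCD Zp by simp
  have "deriv (\<lambda>t. Zs E (x(p:=t)) w V P / Z (x(p:=t)) w V) (x p)
      = ((A / x p) * Dd - B * (C / x p)) / (x p * (C / x p) + Dd)^2"
    by (rule deriv_ratio[OF f nz])
  also have "\<dots> = (A * Z x w V - Zs E x w V P * C) / (x p * (Z x w V)^2)"
    using x0 unfolding ZCD PAB by (simp add: field_simps power2_eq_square)
  finally show ?thesis unfolding A_def C_def .
qed

lemma deriv_w:
  assumes e: "e \<in> E" and xp: "\<forall>v\<in>V. x v > 0" and wp: "\<forall>e\<in>E. w e > 0"
  shows "deriv (\<lambda>t. Zs E x (w(e:=t)) V P / Z x (w(e:=t)) V) (w e)
     = (Zs E x w V (\<lambda>D. P D \<and> e \<in> D) * Z x w V - Zs E x w V P * Zs E x w V (\<lambda>D. e \<in> D)) / (w e * (Z x w V)^2)"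
proof -
  define A where "A = Zs E x w V (\<lambda>D. P D \<and> e \<in> D)"
  define B where "B = Zs E x w V (\<lambda>D. P D \<and> e \<notin> D)"
  define C where "C = Zs E x w V (\<lambda>D. e \<in> D)"
  define Dd where "Dd = Zs E x w V (\<lambda>D. e \<notin> D)"
  have x0: "w e > 0" using wp e by blast
  have ZCD: "Z x w V = C + Dd" unfolding C_def Dd_def using Zs_split[of x w V "\<lambda>_. True" "\<lambda>D. e \<in> D"] by simp
  have PAB: "Zs E x w V P = A + B" unfolding A_def B_def by (rule Zs_split)
  have Zp: "Z x w V > 0" by (rule Z_pos[OF order_refl xp wp])
  have f: "Zs E x (w(e:=t)) V P / Z x (w(e:=t)) V = (t * (A / w e) + B) / (t * (C / w e) + Dd)" for t
    using lin_w[of w e x t V P] lin_w[of w e x t V "\<lambda>_. True"] x0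
    unfolding A_def B_def C_def Dd_def by simp
  have nz: "w e * (C / w e) + Dd \<noteq> 0" using x0 ZCD Zp by simp
  have "deriv (\<lambda>t. Zs E x (w(e:=t)) V P / Z x (w(e:=t)) V) (w e)
      = ((A / w e) * Dd - B * (C / w e)) / (w e * (C / w e) + Dd)^2"
    by (rule deriv_ratio[OF f nz])
  also have "\<dots> = (A * Z x w V - Zs E x w V P * C) / (w e * (Z x w V)^2)"
    using x0 unfolding ZCD PAB by (simp add: field_simps power2_eq_square)
  finally show ?thesis unfolding A_def C_def .
qed

end

context tree begin

lemma cov_self:
  assumes xp: "\<forall>v\<in>V. x v > 0" and wp: "\<forall>e\<in>E. w e > 0"
  shows "Zs E x w V (\<lambda>D. P D \<and> P D) * Z x w V - Zs E x w V P * Zs E x w V P \<ge> 0"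
proof -
  have "Zs E x w V (\<lambda>D. P D \<and> P D) = Zs E x w V P" by (rule Zs_cong) simp
  moreover have "Zs E x w V P \<le> Z x w V" by (rule Zs_le[OF order_refl xp wp])
  moreover have "Zs E x w V P \<ge> 0" by (rule Zs_nonneg[OF order_refl xp wp])
  ultimately show ?thesis by (simp add: mult_left_mono)
qed

lemma cov_vv:
  assumes "a \<in> V" "b \<in> V" "a \<noteq> b"
  shows "Zs E x w V (\<lambda>D. a \<notin> \<Union>D \<and> b \<notin> \<Union>D) * Z x w V - Zs E x w V (\<lambda>D. a \<notin> \<Union>D) * Zs E x w V (\<lambda>D. b \<notin> \<Union>D)
     = - (x a * x b * g x w V a {b})"
  unfolding prod_vv[OF assms] remove_v[OF order_refl assms(1)] remove_v[OF order_refl assms(2)] g_def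
  by (simp add: algebra_simps)

lemma cov_ve:
  assumes "a \<in> V" "e \<in> E" "a \<notin> e"
  shows "Zs E x w V (\<lambda>D. a \<notin> \<Union>D \<and> e \<in> D) * Z x w V - Zs E x w V (\<lambda>D. a \<notin> \<Union>D) * Zs E x w V (\<lambda>D. e \<in> D)
     = - (x a * w e * g x w V a e)"
proof -
  have eV: "e \<subseteq> V" using assms EPow by blast
  show ?thesis
    unfolding prod_ve[OF assms] remove_v[OF order_refl assms(1)] remove_e[OF order_refl assms(2) eV] g_def
    by (simp add: algebra_simps)
qed

lemma cov_ee:
  assumes "f \<in> E" "e \<in> E" "f \<inter> e = {}"
  shows "Zs E x w V (\<lambda>D. f \<in> D \<and> e \<in> D) * Z x w V - Zs E x w V (\<lambda>D. f \<in> D) * Zs E x w V (\<lambda>D. e \<in> D)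
     = - (w f * w e * (Z x w (V - f) * Z x w (V - e) - Z x w V * Z x w (V - f - e)))"
proof -
  have eV: "e \<subseteq> V" and fV: "f \<subseteq> V" using assms EPow by blast+
  show ?thesis
    unfolding prod_ee[OF assms] remove_e[OF order_refl assms(1) fV] remove_e[OF order_refl assms(2) eV]
    by (simp add: algebra_simps)
qed

lemma ee_sign:
  assumes xp: "\<forall>v\<in>V. x v > 0" and wp: "\<forall>e\<in>E. w e > 0"
    and f: "{a,b} \<in> E" and e: "{p,v} \<in> E" and dj: "{a,b} \<inter> {p,v} = {}"
    and le: "vedist V E a p v \<le> vedist V E b p v"
  shows "(-1)^(vedist V E a p v) * (Z x w (V - {a,b}) * Z x w (V - {p,v}) - Z x w V * Z x w (V - {a,b} - {p,v})) \<ge> 0"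
proof -
  have aV: "a \<in> V" and bV: "b \<in> V" and pV: "p \<in> V" and vV: "v \<in> V" using f e EPow by blast+
  have ab: "a \<noteq> b" using f edge2 by force
  have apv: "a \<notin> {p,v}" and bpv: "b \<notin> {p,v}" using dj by blast+
  let ?T = "{p,v}"
  define d where "d = vedist V E a p v"
  obtain P where P: "is_path V E P" "hd P = a" "last P \<in> ?T" "\<forall>y\<in>set (butlast P). y \<notin> ?T"
     "length P = Suc d"
    using first_hit[OF aV pV vV apv] unfolding d_def vedist_def by blast
  have T: "clique ?T" using e unfolding clique_def by (auto simp: insert_commute)
  have Pne: "P \<noteq> []" using P(1) by (simp add: is_path_def)
  have d0: "d \<noteq> 0"
  proof
    assume "d = 0"
    then have "last P = hd P" using P(5) Pne by (simp add: hd_conv_nth last_conv_nth)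
    then show False using P(2,3) apv by simp
  qed
  have P1: "P ! 1 \<noteq> b"
  proof
    assume Pb: "P ! 1 = b"
    have dp: "is_path V E (drop 1 P)" by (rule path_drop[OF P(1)]) (use P(5) d0 in simp)
    have "hd (drop 1 P) = b" using Pb P(5) d0 by (simp add: hd_drop_conv_nth)
    moreover have "last (drop 1 P) = last P" using P(5) d0 by simp
    ultimately have "gdist V E b (last P) \<le> length (drop 1 P) - 1" using gdist_le[OF dp] by blast
    then have gl: "gdist V E b (last P) \<le> d - 1" using P(5) by simp
    have "vedist V E b p v \<le> gdist V E b (last P)" using P(3) unfolding vedist_def by auto
    then show False using gl le d0 unfolding d_def by simp
  qed
  have g0: "g x w (V - {a}) b ?T = 0"
  proof (rule g_zero)
    show "V - {a} \<subseteq> V" by blast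
    show "b \<in> V - {a}" using bV ab by blast
    show "?T \<subseteq> V - {a}" using pV vV apv by blast
    show "b \<notin> ?T" by (rule bpv)
    show "\<forall>xs. is_path (V - {a}) E xs \<and> hd xs = b \<longrightarrow> last xs \<notin> ?T"
    proof (intro allI impI notI)
      fix xs assume xs: "is_path (V - {a}) E xs \<and> hd xs = b" and l: "last xs \<in> ?T"
      have QV: "is_path V E xs" using path_mono[of "V - {a}" E xs V] path_set[of "V - {a}" E xs] xs by blast
      have aQ: "a \<notin> set xs" using path_set[of "V - {a}" E xs] xs by blast
      show False by (rule no_two_paths[OF T f P(1,2,3) apv P1 QV _ l aQ]) (use xs in simp)
    qed
  qed
  have gs: "(-1)^d * g x w V a ?T \<ge> 0"
    using gsign[OF xp wp aV pV vV apv] e unfolding d_def vedist_def by blast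
  define h where "h = Z x w (V - {a,b}) * Z x w (V - {p,v}) - Z x w V * Z x w (V - {a,b} - {p,v})"
  have s1: "V - {a,b} = V - {a} - {b}" by blast
  have s2: "V - {a,b} - {p,v} = V - {a} - {b} - {p,v}" by blast
  have ident: "h * Z x w (V - {a}) = Z x w (V - {a} - {b}) * g x w V a ?T + Z x w V * g x w (V - {a}) b ?T"
    unfolding h_def g_def s1 s2 by (simp add: algebra_simps)
  then have hid: "h * Z x w (V - {a}) = Z x w (V - {a} - {b}) * g x w V a ?T" using g0 by simp
  have Za: "Z x w (V - {a}) > 0" by (rule Z_pos[OF _ xp wp]) blast
  have Zab: "Z x w (V - {a} - {b}) \<ge> 0" by (rule Zs_nonneg[OF _ xp wp]) blast
  have "((-1)^d * h) * Z x w (V - {a}) = Z x w (V - {a} - {b}) * ((-1)^d * g x w V a ?T)"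
    using hid by (simp add: algebra_simps)
  also have "\<dots> \<ge> 0" using Zab gs by simp
  finally have "((-1)^d * h) * Z x w (V - {a}) \<ge> 0" .
  then have "(-1)^d * h \<ge> 0" using Za by (simp add: zero_le_mult_iff)
  then show ?thesis unfolding h_def d_def .
qed

end


theorem proposition5p1:
  fixes V :: "'a set" and E :: "'a set set"
    and x :: "'a \<Rightarrow> real" and w :: "'a set \<Rightarrow> real"
    and o\<^sub>0 u p v :: 'a
  assumes tree: "is_tree V E"
    and xpos: "\<forall>a\<in>V. x a > 0"
    and wpos: "\<forall>e\<in>E. w e > 0"
    and oV: "o\<^sub>0 \<in> V" and pV: "p \<in> V"
    and ou: "{o\<^sub>0, u} \<in> E" and pv: "{p, v} \<in> E"
  shows
    "(o\<^sub>0 = p \<or> odd (gdist V E o\<^sub>0 p) \<longrightarrow>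
        deriv (\<lambda>t. md_R V E (x(p := t)) w o\<^sub>0) (x p) \<ge> 0) \<and>
     (o\<^sub>0 \<noteq> p \<and> even (gdist V E o\<^sub>0 p) \<longrightarrow>
        deriv (\<lambda>t. md_R V E (x(p := t)) w o\<^sub>0) (x p) \<le> 0) \<and>
     ({o\<^sub>0, u} = {p, v} \<or> odd (eedist V E o\<^sub>0 u p v) \<longrightarrow>
        deriv (\<lambda>t. md_E V E x (w({p, v} := t)) {o\<^sub>0, u}) (w {p, v}) \<ge> 0) \<and>
     ({o\<^sub>0, u} \<noteq> {p, v} \<and> even (eedist V E o\<^sub>0 u p v) \<longrightarrow>
        deriv (\<lambda>t. md_E V E x (w({p, v} := t)) {o\<^sub>0, u}) (w {p, v}) \<le> 0) \<and>
     w {p, v} * deriv (\<lambda>t. md_R V E x (w({p, v} := t)) o\<^sub>0) (w {p, v})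
       = x o\<^sub>0 * deriv (\<lambda>t. md_E V E (x(o\<^sub>0 := t)) w {p, v}) (x o\<^sub>0) \<and>
     (even (vedist V E o\<^sub>0 p v) \<longrightarrow>
        w {p, v} * deriv (\<lambda>t. md_R V E x (w({p, v} := t)) o\<^sub>0) (w {p, v}) \<le> 0) \<and>
     (odd (vedist V E o\<^sub>0 p v) \<longrightarrow>
        w {p, v} * deriv (\<lambda>t. md_R V E x (w({p, v} := t)) o\<^sub>0) (w {p, v}) \<ge> 0)"
proof -
  have sg: "simple_graph V E" using tree by (simp add: is_tree_def)
  interpret tree V E by unfold_locales (use sg tree in auto)
  have xp: "\<forall>v\<in>V. x v > 0" using xpos by blast
  have wp: "\<forall>e\<in>E. w e > 0" using wpos by blast
  have uV: "u \<in> V" and vV: "v \<in> V" using ou pv EPow by blast+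
  have ou_ne: "o\<^sub>0 \<noteq> u" using ou edge2 by force
  have pv_ne: "p \<noteq> v" using pv edge2 by force
  define Zt where "Zt = Z x w V"
  have Zp: "Zt > 0" unfolding Zt_def by (rule Z_pos[OF order_refl xp wp])
  define K where "K = (\<lambda>P Q. Zs E x w V (\<lambda>D. P D \<and> Q D) * Zt - Zs E x w V P * Zs E x w V Q)"
  let ?om = "\<lambda>D. o\<^sub>0 \<notin> \<Union>D"
  let ?pm = "\<lambda>D. p \<notin> \<Union>D"
  let ?fin = "\<lambda>D. {o\<^sub>0, u} \<in> D"
  let ?ein = "\<lambda>D. {p, v} \<in> D"
  have D1: "deriv (\<lambda>t. md_R V E (x(p := t)) w o\<^sub>0) (x p) = K ?om ?pm / (x p * Zt^2)"
  proof -
    have "(\<lambda>t. md_R V E (x(p := t)) w o\<^sub>0) = (\<lambda>t. Zs E (x(p:=t)) w V ?om / Z (x(p:=t)) w V)"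
      by (rule ext, rule mdR_eq[OF oV])
    then show ?thesis using deriv_x[OF pV xp wp, of ?om] unfolding K_def Zt_def by simp
  qed
  have D2: "deriv (\<lambda>t. md_E V E x (w({p, v} := t)) {o\<^sub>0, u}) (w {p, v}) = K ?fin ?ein / (w {p,v} * Zt^2)"
  proof -
    have "(\<lambda>t. md_E V E x (w({p, v} := t)) {o\<^sub>0, u}) = (\<lambda>t. Zs E x (w({p, v} := t)) V ?fin / Z x (w({p, v} := t)) V)"
      by (rule ext, rule mdE_eq)
    then show ?thesis using deriv_w[OF pv xp wp, of ?fin] unfolding K_def Zt_def by simp
  qed
  have D3: "deriv (\<lambda>t. md_R V E x (w({p, v} := t)) o\<^sub>0) (w {p, v}) = K ?om ?ein / (w {p,v} * Zt^2)"
  proof -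
    have "(\<lambda>t. md_R V E x (w({p, v} := t)) o\<^sub>0) = (\<lambda>t. Zs E x (w({p, v} := t)) V ?om / Z x (w({p, v} := t)) V)"
      by (rule ext, rule mdR_eq[OF oV])
    then show ?thesis using deriv_w[OF pv xp wp, of ?om] unfolding K_def Zt_def by simp
  qed
  have D4: "deriv (\<lambda>t. md_E V E (x(o\<^sub>0 := t)) w {p, v}) (x o\<^sub>0) = K ?ein ?om / (x o\<^sub>0 * Zt^2)"
  proof -
    have "(\<lambda>t. md_E V E (x(o\<^sub>0 := t)) w {p, v}) = (\<lambda>t. Zs E (x(o\<^sub>0:=t)) w V ?ein / Z (x(o\<^sub>0:=t)) w V)"
      by (rule ext, rule mdE_eq)
    then show ?thesis using deriv_x[OF oV xp wp, of ?ein] unfolding K_def Zt_def by simp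
  qed
  have Ksym: "K ?ein ?om = K ?om ?ein"
  proof -
    have "Zs E x w V (\<lambda>D. ?ein D \<and> ?om D) = Zs E x w V (\<lambda>D. ?om D \<and> ?ein D)" by (rule Zs_cong) blast
    then show ?thesis unfolding K_def by (simp add: mult.commute)
  qed
  have x0: "x o\<^sub>0 > 0" "x p > 0" using xp oV pV by blast+
  have w0: "w {p,v} > 0" using wp pv by blast
  have pZ: "x p * Zt^2 > 0" "w {p,v} * Zt^2 > 0" "x o\<^sub>0 * Zt^2 > 0" "Zt^2 > 0" using x0 w0 Zp by simp_all
  have S1: "o\<^sub>0 = p \<or> odd (gdist V E o\<^sub>0 p) \<longrightarrow> K ?om ?pm \<ge> 0"
   and S2: "o\<^sub>0 \<noteq> p \<and> even (gdist V E o\<^sub>0 p) \<longrightarrow> K ?om ?pm \<le> 0"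
  proof -
    show "o\<^sub>0 = p \<or> odd (gdist V E o\<^sub>0 p) \<longrightarrow> K ?om ?pm \<ge> 0"
    proof (cases "o\<^sub>0 = p")
      case True
      show ?thesis unfolding K_def Zt_def True using cov_self[OF xp wp, of ?pm] by simp
    next
      case False
      have c: "K ?om ?pm = - (x o\<^sub>0 * x p * g x w V o\<^sub>0 {p})" unfolding K_def Zt_def by (rule cov_vv[OF oV pV False])
      have gs: "(-1)^(gdist V E o\<^sub>0 p) * g x w V o\<^sub>0 {p} \<ge> 0" using gsign[OF xp wp oV pV pV] False by simp
      show ?thesis
      proof
        assume "o\<^sub>0 = p \<or> odd (gdist V E o\<^sub>0 p)"
        then have "odd (gdist V E o\<^sub>0 p)" using False by blast
        then have "g x w V o\<^sub>0 {p} \<le> 0" using gs by simp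
        then show "K ?om ?pm \<ge> 0" unfolding c using x0 by (simp add: mult_nonneg_nonpos)
      qed
    qed
    show "o\<^sub>0 \<noteq> p \<and> even (gdist V E o\<^sub>0 p) \<longrightarrow> K ?om ?pm \<le> 0"
    proof
      assume a: "o\<^sub>0 \<noteq> p \<and> even (gdist V E o\<^sub>0 p)"
      have c: "K ?om ?pm = - (x o\<^sub>0 * x p * g x w V o\<^sub>0 {p})" unfolding K_def Zt_def using a by (intro cov_vv[OF oV pV]) blast
      have gs: "(-1)^(gdist V E o\<^sub>0 p) * g x w V o\<^sub>0 {p} \<ge> 0" using gsign[OF xp wp oV pV pV] a by simp
      then have "g x w V o\<^sub>0 {p} \<ge> 0" using a by simp
      then show "K ?om ?pm \<le> 0" unfolding c using x0 by simp
    qed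
  qed
  have S67: "(even (vedist V E o\<^sub>0 p v) \<longrightarrow> K ?om ?ein \<le> 0) \<and> (odd (vedist V E o\<^sub>0 p v) \<longrightarrow> K ?om ?ein \<ge> 0)"
  proof (cases "o\<^sub>0 \<in> {p,v}")
    case True
    have z: "Zs E x w V (\<lambda>D. ?om D \<and> ?ein D) = 0" by (rule Zs_empty) (use True in blast)
    have "Zs E x w V ?om \<ge> 0" "Zs E x w V ?ein \<ge> 0" by (rule Zs_nonneg[OF order_refl xp wp])+
    then have "K ?om ?ein \<le> 0" unfolding K_def z by simp
    moreover have "vedist V E o\<^sub>0 p v = 0" using True gdist_self[OF oV] unfolding vedist_def by auto
    ultimately show ?thesis by simp
  next
    case False
    have c: "K ?om ?ein = - (x o\<^sub>0 * w {p,v} * g x w V o\<^sub>0 {p,v})" unfolding K_def Zt_def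
      by (rule cov_ve[OF oV pv False])
    have gs: "(-1)^(vedist V E o\<^sub>0 p v) * g x w V o\<^sub>0 {p,v} \<ge> 0"
      using gsign[OF xp wp oV pV vV False] pv unfolding vedist_def by blast
    have pos: "x o\<^sub>0 * w {p,v} > 0" using x0 w0 by simp
    show ?thesis
    proof (intro conjI impI)
      assume "even (vedist V E o\<^sub>0 p v)"
      then have "g x w V o\<^sub>0 {p,v} \<ge> 0" using gs by simp
      then show "K ?om ?ein \<le> 0" unfolding c using pos by simp
    next
      assume "odd (vedist V E o\<^sub>0 p v)"
      then have "g x w V o\<^sub>0 {p,v} \<le> 0" using gs by simp
      then show "K ?om ?ein \<ge> 0" unfolding c using pos by (simp add: mult_nonneg_nonpos mult_pos_neg)
    qed
  qed
  have S34: "({o\<^sub>0, u} = {p, v} \<or> odd (eedist V E o\<^sub>0 u p v) \<longrightarrow> K ?fin ?ein \<ge> 0) \<and>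
             ({o\<^sub>0, u} \<noteq> {p, v} \<and> even (eedist V E o\<^sub>0 u p v) \<longrightarrow> K ?fin ?ein \<le> 0)"
  proof (cases "{o\<^sub>0, u} = {p, v}")
    case True
    have "K ?fin ?ein \<ge> 0" unfolding K_def Zt_def True using cov_self[OF xp wp, of ?ein] by simp
    then show ?thesis using True by simp
  next
    case neq: False
    show ?thesis
    proof (cases "{o\<^sub>0, u} \<inter> {p, v} = {}")
      case False
      have z: "Zs E x w V (\<lambda>D. ?fin D \<and> ?ein D) = 0"
      proof (rule Zs_empty)
        fix D assume m: "is_matching E D"
        show "\<not> (?fin D \<and> ?ein D)"
        proof
          assume a: "?fin D \<and> ?ein D"
          have H: "\<forall>e\<in>D. \<forall>f\<in>D. e \<noteq> f \<longrightarrow> e \<inter> f = {}" using m by (simp add: is_matching_def)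
          have i1: "{o\<^sub>0, u} \<in> D" and i2: "{p, v} \<in> D" using a by simp_all
          have "{o\<^sub>0, u} \<inter> {p, v} = {}" using bspec[OF bspec[OF H i1] i2] neq by simp
          then show False using False by simp
        qed
      qed
      have "Zs E x w V ?fin \<ge> 0" "Zs E x w V ?ein \<ge> 0" by (rule Zs_nonneg[OF order_refl xp wp])+
      then have "K ?fin ?ein \<le> 0" unfolding K_def z by simp
      moreover have "eedist V E o\<^sub>0 u p v = 0"
      proof -
        obtain c where c: "c \<in> {o\<^sub>0, u}" "c \<in> {p, v}" using False by blast
        have cV: "c \<in> V" using c oV uV by blast
        have vc: "vedist V E c p v = 0"
        proof (cases "c = p")
          case True then show ?thesis unfolding vedist_def using gdist_self[OF cV] by simp
        next
          case False then have "c = v" using c(2) by simp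
          then show ?thesis unfolding vedist_def using gdist_self[OF cV] by simp
        qed
        show ?thesis
        proof (cases "c = o\<^sub>0")
          case True then show ?thesis unfolding eedist_def using vc by simp
        next
          case False then have "c = u" using c(1) by simp
          then show ?thesis unfolding eedist_def using vc by simp
        qed
      qed
      ultimately show ?thesis using neq by simp
    next
      case True
      have c: "K ?fin ?ein = - (w {o\<^sub>0, u} * w {p, v} * (Z x w (V - {o\<^sub>0, u}) * Z x w (V - {p, v}) - Z x w V * Z x w (V - {o\<^sub>0, u} - {p, v})))"
        unfolding K_def Zt_def by (rule cov_ee[OF ou pv True])
      define h where "h = Z x w (V - {o\<^sub>0, u}) * Z x w (V - {p, v}) - Z x w V * Z x w (V - {o\<^sub>0, u} - {p, v})"
      have hs: "(-1)^(eedist V E o\<^sub>0 u p v) * h \<ge> 0"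
      proof (cases "vedist V E o\<^sub>0 p v \<le> vedist V E u p v")
        case True
        then have "eedist V E o\<^sub>0 u p v = vedist V E o\<^sub>0 p v" unfolding eedist_def by simp
        then show ?thesis unfolding h_def using ee_sign[OF xp wp ou pv \<open>{o\<^sub>0, u} \<inter> {p, v} = {}\<close> True] by simp
      next
        case False
        then have e: "eedist V E o\<^sub>0 u p v = vedist V E u p v" unfolding eedist_def by simp
        have uo: "{u, o\<^sub>0} = {o\<^sub>0, u}" by (rule insert_commute)
        have "(-1)^(vedist V E u p v) * (Z x w (V - {u, o\<^sub>0}) * Z x w (V - {p,v}) - Z x w V * Z x w (V - {u, o\<^sub>0} - {p,v})) \<ge> 0"
          by (rule ee_sign[OF xp wp]) (use ou \<open>{o\<^sub>0, u} \<inter> {p, v} = {}\<close> False pv in \<open>simp_all add: uo\<close>)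
        then show ?thesis unfolding h_def e uo .
      qed
      have pos: "w {o\<^sub>0, u} * w {p, v} > 0" using wp ou pv by simp
      have cK: "K ?fin ?ein = - (w {o\<^sub>0, u} * w {p, v} * h)" unfolding c h_def ..
      show ?thesis
      proof (intro conjI impI)
        assume "{o\<^sub>0, u} = {p, v} \<or> odd (eedist V E o\<^sub>0 u p v)"
        then have "odd (eedist V E o\<^sub>0 u p v)" using neq by blast
        then have "h \<le> 0" using hs by simp
        then show "K ?fin ?ein \<ge> 0" unfolding cK using pos by (simp add: mult_nonneg_nonpos mult_pos_neg)
      next
        assume "{o\<^sub>0, u} \<noteq> {p, v} \<and> even (eedist V E o\<^sub>0 u p v)"
        then have "h \<ge> 0" using hs by simp
        then show "K ?fin ?ein \<le> 0" unfolding cK using pos by simp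
      qed
    qed
  qed
  have E5: "w {p, v} * deriv (\<lambda>t. md_R V E x (w({p, v} := t)) o\<^sub>0) (w {p, v}) = K ?om ?ein / Zt^2"
    unfolding D3 using w0 by (simp add: field_simps)
  have E5': "x o\<^sub>0 * deriv (\<lambda>t. md_E V E (x(o\<^sub>0 := t)) w {p, v}) (x o\<^sub>0) = K ?om ?ein / Zt^2"
    unfolding D4 Ksym using x0 by (simp add: field_simps)
  show ?thesis
    unfolding D1 D2 E5 E5'
  proof (intro conjI impI refl)
    assume "o\<^sub>0 = p \<or> odd (gdist V E o\<^sub>0 p)"
    then have "K ?om ?pm \<ge> 0" using S1 by blast
    then show "0 \<le> K ?om ?pm / (x p * Zt^2)" using pZ(1) by (rule divide_nonneg_pos)
  next
    assume "o\<^sub>0 \<noteq> p \<and> even (gdist V E o\<^sub>0 p)"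
    then have "K ?om ?pm \<le> 0" using S2 by blast
    then show "K ?om ?pm / (x p * Zt^2) \<le> 0" using pZ(1) by (rule divide_nonpos_pos)
  next
    assume "{o\<^sub>0, u} = {p, v} \<or> odd (eedist V E o\<^sub>0 u p v)"
    then have "K ?fin ?ein \<ge> 0" using S34 by blast
    then show "0 \<le> K ?fin ?ein / (w {p,v} * Zt^2)" using pZ(2) by (rule divide_nonneg_pos)
  next
    assume "{o\<^sub>0, u} \<noteq> {p, v} \<and> even (eedist V E o\<^sub>0 u p v)"
    then have "K ?fin ?ein \<le> 0" using S34 by blast
    then show "K ?fin ?ein / (w {p,v} * Zt^2) \<le> 0" using pZ(2) by (rule divide_nonpos_pos)
  next
    assume "even (vedist V E o\<^sub>0 p v)"
    then have "K ?om ?ein \<le> 0" using S67 by blast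
    then show "K ?om ?ein / Zt^2 \<le> 0" using pZ(4) by (rule divide_nonpos_pos)
  next
    assume "odd (vedist V E o\<^sub>0 p v)"
    then have "K ?om ?ein \<ge> 0" using S67 by blast
    then show "0 \<le> K ?om ?ein / Zt^2" using pZ(4) by (rule divide_nonneg_pos)
  qed
qed


end
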